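(* Let $U\subset\mathbb{R}^n$ be open and connected, and let $Qw=\Delta w-\frac{D^2w(Dw,Dw)}{1+|Dw|^2}+|Dw|^2$. Suppose $w,w'\in C^2(U)$ satisfy $Qw\ge Qw'$ and $w\le w'$ in $U$. If $w(x)=w'(x)$ at some point $x\in U$, then $w\equiv w'$ in $U$. Consequently, if $u,u'\in C^2(U)$ with $u,u'>0$ satisfy $$\operatorname{div}\frac{u\,Du}{\sqrt{u^2+|Du|^2}}\ge \operatorname{div}\frac{u'\,Du'}{\sqrt{(u')^2+|Du'|^2}}$$ and $u\le u'$ in $U$, and if $u(x)=u'(x)$ at some point $x\in U$, then $u\equiv u'$ in $U$.
   Context: $D^2w(Dw,Dw)=\sum_{i,j}\partial_i\partial_j w\,\partial_i w\,\partial_j w$. *)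

theory Defs
  imports "HOL-Analysis.Analysis"
begin

definition pd :: "'a::euclidean_space \<Rightarrow> ('a \<Rightarrow> real) \<Rightarrow> 'a \<Rightarrow> real" where
  "pd i f x = frechet_derivative f (at x) i"

definition grad :: "('a::euclidean_space \<Rightarrow> real) \<Rightarrow> 'a \<Rightarrow> 'a" where
  "grad f x = (\<Sum>i\<in>Basis. pd i f x *\<^sub>R i)"

definition lap :: "('a::euclidean_space \<Rightarrow> real) \<Rightarrow> 'a \<Rightarrow> real" where
  "lap f x = (\<Sum>i\<in>Basis. pd i (pd i f) x)"

definition hess_grad_grad :: "('a::euclidean_space \<Rightarrow> real) \<Rightarrow> 'a \<Rightarrow> real" where
  "hess_grad_grad f x = (\<Sum>i\<in>Basis. \<Sum>j\<in>Basis. pd i (pd j f) x * pd i f x * pd j f x)"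

definition Qop :: "('a::euclidean_space \<Rightarrow> real) \<Rightarrow> 'a \<Rightarrow> real" where
  "Qop w x = lap w x - hess_grad_grad w x / (1 + (norm (grad w x))\<^sup>2) + (norm (grad w x))\<^sup>2"

definition divg :: "('a::euclidean_space \<Rightarrow> 'a) \<Rightarrow> 'a \<Rightarrow> real" where
  "divg V x = (\<Sum>i\<in>Basis. pd i (\<lambda>y. V y \<bullet> i) x)"

definition C2_on :: "'a::euclidean_space set \<Rightarrow> ('a \<Rightarrow> real) \<Rightarrow> bool" where
  "C2_on U f \<longleftrightarrow>
     (\<forall>x\<in>U. f differentiable (at x)) \<and>
     (\<forall>i\<in>Basis. \<forall>x\<in>U. pd i f differentiable (at x)) \<and>
     (\<forall>i\<in>Basis. \<forall>j\<in>Basis. continuous_on U (pd j (pd i f)))"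

end

theory Submission
  imports Defs
begin

lemma pd_has: "(f has_derivative f') (at x) \<Longrightarrow> pd i f x = f' i"
  unfolding pd_def by (metis frechet_derivative_at)

lemma grad_inner: "i \<in> Basis \<Longrightarrow> grad f x \<bullet> i = pd i f x"
  unfolding grad_def by (simp add: inner_sum_left inner_Basis if_distrib sum.delta cong: if_cong)

lemma norm_grad_sq: "(norm (grad f x))\<^sup>2 = (\<Sum>i\<in>Basis. (pd i f x)\<^sup>2)"
proof -
  have "(norm (grad f x))\<^sup>2 = grad f x \<bullet> grad f x" by (simp add: power2_norm_eq_inner)
  also have "\<dots> = (\<Sum>i\<in>Basis. (grad f x \<bullet> i) * (grad f x \<bullet> i))" by (rule euclidean_inner)
  finally show ?thesis by (simp add: grad_inner power2_eq_square)
qed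

lemma diff_repr:
  assumes "f differentiable (at x)"
  shows "(f has_derivative (\<lambda>h. \<Sum>i\<in>Basis. (h \<bullet> i) * pd i f x)) (at x)"
proof -
  let ?D = "frechet_derivative f (at x)"
  have d: "(f has_derivative ?D) (at x)" using assms frechet_derivative_works by blast
  have l: "linear ?D" using d has_derivative_linear by blast
  have "?D h = (\<Sum>i\<in>Basis. (h \<bullet> i) * pd i f x)" for h
  proof -
    have "?D h = ?D (\<Sum>i\<in>Basis. (h \<bullet> i) *\<^sub>R i)" by (simp add: euclidean_representation)
    also have "\<dots> = (\<Sum>i\<in>Basis. (h \<bullet> i) * ?D i)"
      using l by (simp add: linear_sum linear_cmul)
    finally show ?thesis by (simp add: pd_def)
  qed
  then have "?D = (\<lambda>h. \<Sum>i\<in>Basis. (h \<bullet> i) * pd i f x)" by auto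
  with d show ?thesis by simp
qed

lemma pd_cong:
  assumes "open S" "x \<in> S" "\<And>y. y \<in> S \<Longrightarrow> f y = g y"
  shows "pd i f x = pd i g x"
proof -
  have "(\<lambda>D. (f has_derivative D) (at x)) = (\<lambda>D. (g has_derivative D) (at x))"
    using assms by (metis has_derivative_transform_within_open)
  then show ?thesis unfolding pd_def frechet_derivative_def by simp
qed

lemma sum_Basis_delta: "j \<in> Basis \<Longrightarrow> (\<Sum>i\<in>Basis. (j \<bullet> i) * g i) = g j"
proof -
  assume j: "j \<in> Basis"
  have "(\<Sum>i\<in>Basis. (j \<bullet> i) * g i) = (\<Sum>i\<in>Basis. if i = j then g i else 0)"
    by (rule sum.cong) (auto simp: inner_Basis j)
  also have "\<dots> = g j" using j by simp
  finally show ?thesis .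
qed

lemma line_deriv:
  assumes "f differentiable (at (x + t *\<^sub>R \<xi>))"
  shows "((\<lambda>s. f (x + s *\<^sub>R \<xi>)) has_real_derivative
           (\<Sum>j\<in>Basis. (\<xi> \<bullet> j) * pd j f (x + t *\<^sub>R \<xi>))) (at t)"
proof -
  have l: "((\<lambda>s. x + s *\<^sub>R \<xi>) has_derivative (\<lambda>s. s *\<^sub>R \<xi>)) (at t)"
    by (intro derivative_eq_intros) auto
  have "((\<lambda>s. f (x + s *\<^sub>R \<xi>)) has_derivative
      (\<lambda>s. \<Sum>i\<in>Basis. ((s *\<^sub>R \<xi>) \<bullet> i) * pd i f (x + t *\<^sub>R \<xi>))) (at t)"
    using has_derivative_compose[OF l diff_repr[OF assms]] by (simp add: o_def)
  moreover have "(\<lambda>s. \<Sum>i\<in>Basis. ((s *\<^sub>R \<xi>) \<bullet> i) * pd i f (x + t *\<^sub>R \<xi>))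
     = (*) (\<Sum>j\<in>Basis. (\<xi> \<bullet> j) * pd j f (x + t *\<^sub>R \<xi>))"
    by (rule ext, subst sum_distrib_right, rule sum.cong, simp, simp add: algebra_simps)
  ultimately show ?thesis unfolding has_field_derivative_def by simp
qed

lemma min2:
  fixes f :: "'a::euclidean_space \<Rightarrow> real"
  assumes S: "open S" "x \<in> S" and mn: "\<forall>y\<in>S. f x \<le> f y"
    and df: "\<forall>y\<in>S. f differentiable (at y)"
    and dg: "\<forall>j\<in>Basis. pd j f differentiable (at x)"
  shows "\<forall>j\<in>Basis. pd j f x = 0"
    and "(\<Sum>i\<in>Basis. \<Sum>j\<in>Basis. (\<xi> \<bullet> i) * (\<xi> \<bullet> j) * pd i (pd j f) x) \<ge> 0"
proof -
  have "(\<lambda>h. \<Sum>i\<in>Basis. (h \<bullet> i) * pd i f x) = (\<lambda>v. 0)"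
    using differential_zero_maxmin[OF S(2) S(1) diff_repr] df S mn by blast
  then have z: "(\<Sum>i\<in>Basis. (j \<bullet> i) * pd i f x) = 0" for j by metis
  show pd0: "\<forall>j\<in>Basis. pd j f x = 0"
  proof
    fix j :: 'a assume j: "j \<in> Basis"
    have "(\<Sum>i\<in>Basis. (j \<bullet> i) * pd i f x) = pd j f x"
      using j by (rule sum_Basis_delta)
    with z[of j] show "pd j f x = 0" by simp
  qed
  let ?Q = "(\<Sum>i\<in>Basis. \<Sum>j\<in>Basis. (\<xi> \<bullet> i) * (\<xi> \<bullet> j) * pd i (pd j f) x)"
  define g where "g s = f (x + s *\<^sub>R \<xi>)" for s
  define g' where "g' s = (\<Sum>j\<in>Basis. (\<xi> \<bullet> j) * pd j f (x + s *\<^sub>R \<xi>))" for s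
  obtain e where e: "e > 0" "ball x e \<subseteq> S" using S open_contains_ball by blast
  have inS: "x + s *\<^sub>R \<xi> \<in> S" if "\<bar>s\<bar> * norm \<xi> < e" for s
    using e that by (auto simp: dist_norm)
  have dg': "DERIV g s :> g' s" if "\<bar>s\<bar> * norm \<xi> < e" for s
    unfolding g_def g'_def by (rule line_deriv) (use df inS[OF that] in blast)
  have g'0: "g' 0 = 0" using pd0 by (simp add: g'_def)
  have "DERIV g' 0 :> ?Q"
  proof -
    have "((\<lambda>s. pd j f (x + s *\<^sub>R \<xi>)) has_real_derivative
           (\<Sum>i\<in>Basis. (\<xi> \<bullet> i) * pd i (pd j f) x)) (at 0)" if "j \<in> Basis" for j
      using line_deriv[of "pd j f" x 0 \<xi>] dg that by simp
    then have "DERIV g' 0 :> (\<Sum>j\<in>Basis. (\<xi> \<bullet> j) * (\<Sum>i\<in>Basis. (\<xi> \<bullet> i) * pd i (pd j f) x))"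
      unfolding g'_def by (intro DERIV_sum DERIV_cmult) auto
    moreover have "(\<Sum>j\<in>Basis. (\<xi> \<bullet> j) * (\<Sum>i\<in>Basis. (\<xi> \<bullet> i) * pd i (pd j f) x)) = ?Q"
      by (subst sum.swap) (simp add: sum_distrib_left mult.assoc mult.commute mult.left_commute)
    ultimately show ?thesis by simp
  qed
  show "?Q \<ge> 0"
  proof (rule ccontr)
    assume "\<not> ?Q \<ge> 0"
    then obtain d where d: "d > 0" "\<forall>h>0. h < d \<longrightarrow> g' h < 0"
      using DERIV_neg_dec_right[OF \<open>DERIV g' 0 :> ?Q\<close>] g'0 by force
    define t where "t = min (d/2) (e / (2 * (norm \<xi> + 1)))"
    have np: "2 * (norm \<xi> + 1) > 0" by (simp add: add_nonneg_pos)
    have "e / (2 * (norm \<xi> + 1)) > 0" using e np by simp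
    then have t: "t > 0" "t < d" using d e by (auto simp: t_def)
    have tn: "s * norm \<xi> < e" if "0 \<le> s" "s \<le> t" for s
    proof -
      have "s * norm \<xi> \<le> t * (norm \<xi> + 1)" using that t by (intro mult_mono) auto
      also have "\<dots> \<le> e/2"
      proof -
        have "t \<le> e / (2 * (norm \<xi> + 1))" by (simp add: t_def)
        then have "t * (2 * (norm \<xi> + 1)) \<le> e" using np by (simp add: pos_le_divide_eq)
        then show ?thesis by (simp add: algebra_simps)
      qed
      finally show ?thesis using e by simp
    qed
    obtain z where z: "0 < z" "z < t" "g t - g 0 = (t - 0) * g' z"
      using MVT2[of 0 t g g'] t dg' tn by force
    have "g' z < 0" using d z t by auto
    then have "t * g' z < 0" using t by (simp add: mult_pos_neg)
    then have "g t < g 0" using z by simp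
    moreover have "g 0 \<le> g t" unfolding g_def using mn inS tn[of t] t by simp
    ultimately show False by simp
  qed
qed

lemma norm_sq_sum: "(norm q)\<^sup>2 = (\<Sum>k\<in>Basis. (q \<bullet> k)\<^sup>2)"
proof -
  have "(norm q)\<^sup>2 = q \<bullet> q" by (simp add: power2_norm_eq_inner)
  also have "\<dots> = (\<Sum>i\<in>Basis. (q \<bullet> i) * (q \<bullet> i))" by (rule euclidean_inner)
  finally show ?thesis by (simp add: power2_eq_square)
qed

definition bil :: "('a::euclidean_space \<Rightarrow> 'a \<Rightarrow> real) \<Rightarrow> 'a \<Rightarrow> 'a \<Rightarrow> real" where
  "bil N x y = (\<Sum>k\<in>Basis. \<Sum>l\<in>Basis. (x \<bullet> k) * (y \<bullet> l) * N k l)"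

lemma bil_basis: "a \<in> Basis \<Longrightarrow> b \<in> Basis \<Longrightarrow> bil N a b = N a b"
proof -
  assume a: "a \<in> Basis" and b: "b \<in> Basis"
  have "bil N a b = (\<Sum>k\<in>Basis. (a \<bullet> k) * (\<Sum>l\<in>Basis. (b \<bullet> l) * N k l))"
    unfolding bil_def by (simp add: sum_distrib_left mult.assoc)
  also have "\<dots> = (\<Sum>l\<in>Basis. (b \<bullet> l) * N a l)" using a by (rule sum_Basis_delta)
  also have "\<dots> = N a b" using b by (rule sum_Basis_delta)
  finally show ?thesis .
qed

lemma bil_expand:
  "bil N (t *\<^sub>R a + b) (t *\<^sub>R a + b) = t\<^sup>2 * bil N a a + t * (bil N a b + bil N b a) + bil N b b"
proof -
  have e: "((t *\<^sub>R a + b) \<bullet> k) * ((t *\<^sub>R a + b) \<bullet> l) * N k l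
     = t\<^sup>2 * ((a \<bullet> k) * (a \<bullet> l) * N k l) + (t * ((a \<bullet> k) * (b \<bullet> l) * N k l) + t * ((b \<bullet> k) * (a \<bullet> l) * N k l))
       + (b \<bullet> k) * (b \<bullet> l) * N k l" for k l
    unfolding inner_add_left inner_scaleR_left power2_eq_square by algebra
  show ?thesis unfolding bil_def e
    by (simp only: sum.distrib sum_distrib_left distrib_left)
qed

lemma disc:
  fixes A B C :: real
  assumes "\<forall>t. A * t\<^sup>2 + B * t + C \<ge> 0"
  shows "B\<^sup>2 \<le> 4 * A * C"
proof (cases "A > 0")
  case True
  have "A * (-B/(2*A))\<^sup>2 + B * (-B/(2*A)) + C \<ge> 0" using assms by blast
  then have "B\<^sup>2 / (4*A) - B\<^sup>2/(2*A) + C \<ge> 0" using True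
    by (simp add: power2_eq_square field_simps)
  then have "C - B\<^sup>2/(4*A) \<ge> 0" by (simp add: field_simps)
  then show ?thesis using True by (simp add: field_simps)
next
  case False
  show ?thesis
  proof (cases "A = 0")
    case True
    have "B = 0"
    proof (rule ccontr)
      assume "B \<noteq> 0"
      have "A * (-(C+1)/B)\<^sup>2 + B * (-(C+1)/B) + C \<ge> 0" using assms by blast
      with True \<open>B \<noteq> 0\<close> show False by simp
    qed
    then show ?thesis using True by simp
  next
    case nA: False
    with False have A: "A < 0" by simp
    define K where "K = \<bar>B\<bar> + \<bar>C\<bar> + 1"
    define t where "t = max 1 (K / (- A))"
    have t: "t \<ge> 1" unfolding t_def by simp
    have "K / (-A) \<le> t" unfolding t_def by simp
    then have "(K / (-A)) * (-A) \<le> t * (-A)" using A by (intro mult_right_mono) auto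
    moreover have "(K / (-A)) * (-A) = K" using A by simp
    ultimately have Kt: "K \<le> (-A) * t" by (simp add: mult.commute)
    have "A * t\<^sup>2 = - ((-A) * t) * t" by (simp add: power2_eq_square)
    also have "\<dots> \<le> - K * t" using Kt t by (intro mult_right_mono) auto
    finally have At: "A * t\<^sup>2 \<le> - K * t" .
    have "A * t\<^sup>2 + B * t + C \<ge> 0" using assms by blast
    moreover have "B * t \<le> \<bar>B\<bar> * t" using t by (simp add: mult_right_mono)
    moreover have "C \<le> \<bar>C\<bar> * t"
    proof -
      have "\<bar>C\<bar> * 1 \<le> \<bar>C\<bar> * t" using t by (intro mult_left_mono) auto
      then show ?thesis by (simp add: abs_ge_self order_trans[OF abs_ge_self])
    qed
    ultimately have "0 \<le> - K * t + \<bar>B\<bar> * t + \<bar>C\<bar> * t" using At by linarith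
    then have "0 \<le> - t" unfolding K_def by (simp add: algebra_simps)
    with t show ?thesis by simp
  qed
qed

lemma psd_offdiag:
  assumes psd: "\<forall>\<xi>. bil N \<xi> \<xi> \<ge> 0" and i: "i \<in> Basis" and j: "j \<in> Basis"
  shows "(N i j + N j i)\<^sup>2 \<le> 4 * N i i * N j j"
proof -
  have "\<forall>t. N i i * t\<^sup>2 + (N i j + N j i) * t + N j j \<ge> 0"
  proof
    fix t
    have "bil N (t *\<^sub>R i + j) (t *\<^sub>R i + j) \<ge> 0" using psd by blast
    then show "N i i * t\<^sup>2 + (N i j + N j i) * t + N j j \<ge> 0"
      unfolding bil_expand using i j by (simp add: bil_basis algebra_simps)
  qed
  then show ?thesis by (rule disc)
qed

lemma psd_trace:
  fixes N :: "'a::euclidean_space \<Rightarrow> 'a \<Rightarrow> real" and q :: 'a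
  assumes psd: "\<forall>\<xi>. bil N \<xi> \<xi> \<ge> 0" and q: "norm q \<le> 1"
  shows "bil N q q \<le> (\<Sum>i\<in>Basis. N i i)"
proof -
  have diag: "N i i \<ge> 0" if "i \<in> Basis" for i
    using psd[rule_format, of i] bil_basis[OF that that] by simp
  define r where "r i = sqrt (N i i)" for i
  have r2: "r i * r i = N i i" if "i \<in> Basis" for i using diag[OF that] by (simp add: r_def)
  have el: "(N k l + N l k)/2 * (q \<bullet> k) * (q \<bullet> l) \<le> (\<bar>q \<bullet> k\<bar> * r k) * (\<bar>q \<bullet> l\<bar> * r l)"
    if k: "k \<in> Basis" and l: "l \<in> Basis" for k l
  proof -
    have "((N k l + N l k)/2)\<^sup>2 \<le> (r k * r l)\<^sup>2"
    proof -
      have "(r k * r l)\<^sup>2 = (r k * r k) * (r l * r l)" by (simp add: power2_eq_square mult_ac)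
      also have "\<dots> = N k k * N l l" using r2[OF k] r2[OF l] by simp
      finally have "(r k * r l)\<^sup>2 = N k k * N l l" .
      moreover have "((N k l + N l k)/2)\<^sup>2 = (N k l + N l k)\<^sup>2 / 4" by (simp add: power_divide)
      ultimately show ?thesis using psd_offdiag[OF psd k l] by simp
    qed
    then have "\<bar>(N k l + N l k)/2\<bar> \<le> \<bar>r k * r l\<bar>"
      using abs_le_square_iff by blast
    moreover have "r k * r l \<ge> 0" unfolding r_def using diag k l by simp
    ultimately have X: "\<bar>(N k l + N l k)/2\<bar> \<le> r k * r l" by simp
    have "(N k l + N l k)/2 * ((q \<bullet> k) * (q \<bullet> l)) \<le> \<bar>(N k l + N l k)/2 * ((q \<bullet> k) * (q \<bullet> l))\<bar>"
      by (rule abs_ge_self)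
    also have "\<dots> = \<bar>(N k l + N l k)/2\<bar> * \<bar>(q \<bullet> k) * (q \<bullet> l)\<bar>" by (rule abs_mult)
    also have "\<dots> \<le> r k * r l * \<bar>(q \<bullet> k) * (q \<bullet> l)\<bar>"
      using X by (rule mult_right_mono) simp
    finally have "(N k l + N l k)/2 * ((q \<bullet> k) * (q \<bullet> l)) \<le> r k * r l * \<bar>(q \<bullet> k) * (q \<bullet> l)\<bar>" .
    then show ?thesis by (simp add: abs_mult algebra_simps)
  qed
  have "bil N q q = (\<Sum>k\<in>Basis. \<Sum>l\<in>Basis. (N k l + N l k)/2 * (q \<bullet> k) * (q \<bullet> l))"
  proof -
    have s: "(\<Sum>k\<in>Basis. \<Sum>l\<in>Basis. N l k * (q \<bullet> k) * (q \<bullet> l)) = bil N q q"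
      unfolding bil_def by (subst sum.swap) (simp add: algebra_simps)
    have "(\<Sum>k\<in>Basis. \<Sum>l\<in>Basis. (N k l + N l k)/2 * (q \<bullet> k) * (q \<bullet> l))
      = ((\<Sum>k\<in>Basis. \<Sum>l\<in>Basis. N k l * (q \<bullet> k) * (q \<bullet> l))
         + (\<Sum>k\<in>Basis. \<Sum>l\<in>Basis. N l k * (q \<bullet> k) * (q \<bullet> l))) / 2"
      by (simp add: sum.distrib sum_divide_distrib algebra_simps add_divide_distrib)
    also have "(\<Sum>k\<in>Basis. \<Sum>l\<in>Basis. N k l * (q \<bullet> k) * (q \<bullet> l)) = bil N q q"
      unfolding bil_def by (simp add: algebra_simps)
    finally show ?thesis using s by simp
  qed
  also have "\<dots> \<le> (\<Sum>k\<in>Basis. \<Sum>l\<in>Basis. (\<bar>q \<bullet> k\<bar> * r k) * (\<bar>q \<bullet> l\<bar> * r l))"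
    by (intro sum_mono el)
  also have "\<dots> = (\<Sum>k\<in>Basis. \<bar>q \<bullet> k\<bar> * r k)\<^sup>2"
    by (simp only: power2_eq_square sum_product)
  also have "\<dots> \<le> (\<Sum>k\<in>Basis. \<bar>q \<bullet> k\<bar>\<^sup>2) * (\<Sum>k\<in>Basis. (r k)\<^sup>2)"
    by (rule Cauchy_Schwarz_ineq_sum)
  also have "\<dots> = (norm q)\<^sup>2 * (\<Sum>k\<in>Basis. N k k)"
  proof -
    have "(\<Sum>k\<in>Basis. \<bar>q \<bullet> k\<bar>\<^sup>2) = (norm q)\<^sup>2" by (simp add: norm_sq_sum)
    moreover have "(\<Sum>k\<in>Basis. (r k)\<^sup>2) = (\<Sum>k\<in>Basis. N k k)"
      by (rule sum.cong) (simp_all add: power2_eq_square r2)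
    ultimately show ?thesis by simp
  qed
  also have "\<dots> \<le> 1 * (\<Sum>k\<in>Basis. N k k)"
    using q diag by (intro mult_right_mono sum_nonneg) (auto simp: power_le_one)
  finally show ?thesis by simp
qed

lemma pd_diff:
  assumes "f differentiable (at x)" "g differentiable (at x)"
  shows "pd i (\<lambda>z. f z - g z) x = pd i f x - pd i g x"
proof -
  have "((\<lambda>z. f z - g z) has_derivative (\<lambda>h. frechet_derivative f (at x) h - frechet_derivative g (at x) h)) (at x)"
    using assms frechet_derivative_works by (intro has_derivative_diff) auto
  then show ?thesis using pd_has by (metis pd_def)
qed

lemma pd_cmult:
  assumes "f differentiable (at x)"
  shows "pd i (\<lambda>z. c * f z) x = c * pd i f x"
proof -
  have "((\<lambda>z. c * f z) has_derivative (\<lambda>h. c * frechet_derivative f (at x) h)) (at x)"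
    using assms frechet_derivative_works by (intro has_derivative_mult_right) auto
  then show ?thesis using pd_has by (metis pd_def)
qed

definition hb :: "real \<Rightarrow> 'a::euclidean_space \<Rightarrow> real \<Rightarrow> 'a \<Rightarrow> real" where
  "hb \<alpha> y R x = exp (- \<alpha> * ((x - y) \<bullet> (x - y))) - exp (- \<alpha> * R\<^sup>2)"

lemma hb_deriv:
  "(hb \<alpha> y R has_derivative (\<lambda>v. exp (- \<alpha> * ((x - y) \<bullet> (x - y))) * (- \<alpha> * (2 * ((x - y) \<bullet> v))))) (at x)"
  unfolding hb_def
  by (auto intro!: derivative_eq_intros simp: inner_commute algebra_simps)

lemma pd_hb: "pd j (hb \<alpha> y R) = (\<lambda>x. - 2 * \<alpha> * ((x - y) \<bullet> j) * exp (- \<alpha> * ((x - y) \<bullet> (x - y))))"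
  by (rule ext, subst pd_has[OF hb_deriv]) (simp add: algebra_simps)

lemma pd_hb_deriv:
  "(pd j (hb \<alpha> y R) has_derivative
     (\<lambda>v. - 2 * \<alpha> * ((v \<bullet> j) * exp (- \<alpha> * ((x - y) \<bullet> (x - y)))
        + ((x - y) \<bullet> j) * (exp (- \<alpha> * ((x - y) \<bullet> (x - y))) * (- \<alpha> * (2 * ((x - y) \<bullet> v))))))) (at x)"
  unfolding pd_hb
  by (auto intro!: derivative_eq_intros simp: inner_commute algebra_simps)

lemma pd2_hb:
  "pd i (pd j (hb \<alpha> y R)) x = exp (- \<alpha> * ((x - y) \<bullet> (x - y))) *
      (4 * \<alpha>\<^sup>2 * ((x - y) \<bullet> i) * ((x - y) \<bullet> j) - 2 * \<alpha> * (i \<bullet> j))"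
  by (subst pd_has[OF pd_hb_deriv]) (simp add: algebra_simps power2_eq_square inner_commute)

lemma hb_diff: "hb \<alpha> y R differentiable (at x)"
  using hb_deriv differentiableI by blast

lemma pd_hb_diff: "pd j (hb \<alpha> y R) differentiable (at x)"
  using pd_hb_deriv differentiableI by blast

definition Aop :: "'a::euclidean_space \<Rightarrow> ('a \<Rightarrow> 'a \<Rightarrow> real) \<Rightarrow> real" where
  "Aop q N = (\<Sum>i\<in>Basis. N i i) - bil N q q"

lemma bil_lin: "bil (\<lambda>i j. N1 i j - e * N2 i j - N3 i j) x y = bil N1 x y - e * bil N2 x y - bil N3 x y"
proof -
  have "bil (\<lambda>i j. N1 i j - e * N2 i j - N3 i j) x y =
     (\<Sum>k\<in>Basis. \<Sum>l\<in>Basis. (x \<bullet> k) * (y \<bullet> l) * N1 k l - e * ((x \<bullet> k) * (y \<bullet> l) * N2 k l) - (x \<bullet> k) * (y \<bullet> l) * N3 k l)"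
    unfolding bil_def by (rule sum.cong, simp, rule sum.cong, simp, simp add: algebra_simps)
  also have "\<dots> = bil N1 x y - e * bil N2 x y - bil N3 x y"
    unfolding bil_def by (simp only: sum_subtractf sum_distrib_left)
  finally show ?thesis .
qed

lemma Aop_lin: "Aop q (\<lambda>i j. N1 i j - e * N2 i j - N3 i j) = Aop q N1 - e * Aop q N2 - Aop q N3"
proof -
  have "(\<Sum>i\<in>Basis. N1 i i - e * N2 i i - N3 i i) = (\<Sum>i\<in>Basis. N1 i i) - e * (\<Sum>i\<in>Basis. N2 i i) - (\<Sum>i\<in>Basis. N3 i i)"
    by (simp only: sum_subtractf sum_distrib_left)
  then show ?thesis unfolding Aop_def bil_lin by (simp add: algebra_simps)
qed

lemma Aop_psd: "\<forall>\<xi>. bil N \<xi> \<xi> \<ge> 0 \<Longrightarrow> norm q \<le> 1 \<Longrightarrow> Aop q N \<ge> 0"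
  unfolding Aop_def using psd_trace by fastforce

lemma Aop_H:
  fixes q d :: "'a::euclidean_space"
  assumes H: "H = (\<lambda>i j. E * (4 * \<alpha>\<^sup>2 * (d \<bullet> i) * (d \<bullet> j) - 2 * \<alpha> * (i \<bullet> j)))"
    and E: "E \<ge> 0" and \<alpha>: "\<alpha> \<ge> 0" and q: "(norm q)\<^sup>2 \<le> 1 - \<theta>" and \<theta>: "\<theta> \<ge> 0"
    and \<rho>: "0 \<le> \<rho>" "\<rho> \<le> norm d"
  shows "Aop q H \<ge> E * (4 * \<alpha>\<^sup>2 * \<rho>\<^sup>2 * \<theta> - 2 * \<alpha> * DIM('a))"
proof -
  have s1: "(\<Sum>i\<in>Basis. H i i) = E * (4 * \<alpha>\<^sup>2 * (norm d)\<^sup>2 - 2 * \<alpha> * DIM('a))"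
  proof -
    have "(\<Sum>i\<in>Basis. H i i) = (\<Sum>i\<in>Basis. E * (4 * \<alpha>\<^sup>2) * (d \<bullet> i)\<^sup>2 - E * (2 * \<alpha>))"
      unfolding H by (rule sum.cong) (auto simp: inner_Basis power2_eq_square algebra_simps)
    also have "\<dots> = E * (4 * \<alpha>\<^sup>2) * (\<Sum>i\<in>Basis. (d \<bullet> i)\<^sup>2) - DIM('a) * (E * (2 * \<alpha>))"
      by (simp add: sum_subtractf sum_distrib_left)
    finally show ?thesis by (simp add: norm_sq_sum algebra_simps)
  qed
  have s2: "bil H q q = E * (4 * \<alpha>\<^sup>2 * (q \<bullet> d)\<^sup>2 - 2 * \<alpha> * (norm q)\<^sup>2)"
  proof -
    have "bil H q q = (\<Sum>k\<in>Basis. \<Sum>l\<in>Basis. E * (4 * \<alpha>\<^sup>2) * (((q \<bullet> k) * (d \<bullet> k)) * ((q \<bullet> l) * (d \<bullet> l)))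
         - E * (2 * \<alpha>) * ((q \<bullet> k) * ((k \<bullet> l) * (q \<bullet> l))))"
      unfolding bil_def H by (rule sum.cong, simp, rule sum.cong, simp, simp add: algebra_simps)
    also have "\<dots> = E * (4 * \<alpha>\<^sup>2) * ((\<Sum>k\<in>Basis. (q \<bullet> k) * (d \<bullet> k)) * (\<Sum>l\<in>Basis. (q \<bullet> l) * (d \<bullet> l)))
        - E * (2 * \<alpha>) * (\<Sum>k\<in>Basis. (q \<bullet> k) * (\<Sum>l\<in>Basis. (k \<bullet> l) * (q \<bullet> l)))"
    proof -
      have a: "(\<Sum>k\<in>Basis. \<Sum>l\<in>Basis. E * (4 * \<alpha>\<^sup>2) * (((q \<bullet> k) * (d \<bullet> k)) * ((q \<bullet> l) * (d \<bullet> l))))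
         = E * (4 * \<alpha>\<^sup>2) * ((\<Sum>k\<in>Basis. (q \<bullet> k) * (d \<bullet> k)) * (\<Sum>l\<in>Basis. (q \<bullet> l) * (d \<bullet> l)))"
      proof -
        have "(\<Sum>k\<in>Basis. \<Sum>l\<in>Basis. E * (4 * \<alpha>\<^sup>2) * (((q \<bullet> k) * (d \<bullet> k)) * ((q \<bullet> l) * (d \<bullet> l))))
          = E * (4 * \<alpha>\<^sup>2) * (\<Sum>k\<in>Basis. \<Sum>l\<in>Basis. ((q \<bullet> k) * (d \<bullet> k)) * ((q \<bullet> l) * (d \<bullet> l)))"
          by (simp add: sum_distrib_left)
        also have "(\<Sum>k\<in>Basis. \<Sum>l\<in>Basis. ((q \<bullet> k) * (d \<bullet> k)) * ((q \<bullet> l) * (d \<bullet> l)))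
          = (\<Sum>k\<in>Basis. (q \<bullet> k) * (d \<bullet> k)) * (\<Sum>l\<in>Basis. (q \<bullet> l) * (d \<bullet> l))"
          by (rule sum_product[symmetric])
        finally show ?thesis .
      qed
      have b: "(\<Sum>k\<in>Basis. \<Sum>l\<in>Basis. E * (2 * \<alpha>) * ((q \<bullet> k) * ((k \<bullet> l) * (q \<bullet> l))))
         = E * (2 * \<alpha>) * (\<Sum>k\<in>Basis. (q \<bullet> k) * (\<Sum>l\<in>Basis. (k \<bullet> l) * (q \<bullet> l)))"
        by (simp only: sum_distrib_left)
      show ?thesis by (simp only: sum_subtractf a b)
    qed
    also have "(\<Sum>k\<in>Basis. (q \<bullet> k) * (\<Sum>l\<in>Basis. (k \<bullet> l) * (q \<bullet> l))) = (\<Sum>k\<in>Basis. (q \<bullet> k)\<^sup>2)"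
      by (rule sum.cong) (simp_all add: sum_Basis_delta power2_eq_square)
    also have "(\<Sum>k\<in>Basis. (q \<bullet> k) * (d \<bullet> k)) = q \<bullet> d" by (rule euclidean_inner[symmetric])
    finally show ?thesis unfolding norm_sq_sum by (simp add: power2_eq_square algebra_simps)
  qed
  have cs: "(q \<bullet> d)\<^sup>2 \<le> (norm q)\<^sup>2 * (norm d)\<^sup>2"
  proof -
    have "\<bar>q \<bullet> d\<bar> \<le> norm q * norm d" by (rule Cauchy_Schwarz_ineq2)
    then have "\<bar>q \<bullet> d\<bar>\<^sup>2 \<le> (norm q * norm d)\<^sup>2" by (intro power_mono) auto
    then show ?thesis by (simp add: power_mult_distrib)
  qed
  have q1: "(norm q)\<^sup>2 \<le> 1" using q \<theta> by simp
  have k: "\<rho>\<^sup>2 * \<theta> \<le> (norm d)\<^sup>2 * (1 - (norm q)\<^sup>2)"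
    using \<rho> q \<theta> by (intro mult_mono power_mono) auto
  have "Aop q H = E * (4 * \<alpha>\<^sup>2 * ((norm d)\<^sup>2 - (q \<bullet> d)\<^sup>2) + 2 * \<alpha> * (norm q)\<^sup>2 - 2 * \<alpha> * DIM('a))"
    unfolding Aop_def s1 s2 by (simp add: algebra_simps)
  also have "\<dots> \<ge> E * (4 * \<alpha>\<^sup>2 * ((norm d)\<^sup>2 * (1 - (norm q)\<^sup>2)) - 2 * \<alpha> * DIM('a))"
  proof -
    have "(norm d)\<^sup>2 * (1 - (norm q)\<^sup>2) \<le> (norm d)\<^sup>2 - (q \<bullet> d)\<^sup>2" using cs by (simp add: algebra_simps)
    then have "4 * \<alpha>\<^sup>2 * ((norm d)\<^sup>2 * (1 - (norm q)\<^sup>2)) \<le> 4 * \<alpha>\<^sup>2 * ((norm d)\<^sup>2 - (q \<bullet> d)\<^sup>2)"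
      by (intro mult_left_mono) auto
    moreover have "0 \<le> 2 * \<alpha> * (norm q)\<^sup>2" using \<alpha> by simp
    ultimately show ?thesis using E by (intro mult_left_mono) auto
  qed
  also have "E * (4 * \<alpha>\<^sup>2 * ((norm d)\<^sup>2 * (1 - (norm q)\<^sup>2)) - 2 * \<alpha> * DIM('a))
     \<ge> E * (4 * \<alpha>\<^sup>2 * \<rho>\<^sup>2 * \<theta> - 2 * \<alpha> * DIM('a))"
  proof -
    have "4 * \<alpha>\<^sup>2 * (\<rho>\<^sup>2 * \<theta>) \<le> 4 * \<alpha>\<^sup>2 * ((norm d)\<^sup>2 * (1 - (norm q)\<^sup>2))"
      using k by (intro mult_left_mono) auto
    then show ?thesis using E by (intro mult_left_mono) (auto simp: algebra_simps)
  qed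
  finally show ?thesis .
qed

lemma min1:
  fixes f :: "'a::euclidean_space \<Rightarrow> real"
  assumes "open S" "x \<in> S" "\<forall>y\<in>S. f x \<le> f y" "f differentiable (at x)"
  shows "\<forall>j\<in>Basis. pd j f x = 0"
proof -
  have "(\<lambda>h. \<Sum>i\<in>Basis. (h \<bullet> i) * pd i f x) = (\<lambda>v. 0)"
    using differential_zero_maxmin[OF assms(2) assms(1) diff_repr[OF assms(4)]] assms(3) by blast
  then have z: "(\<Sum>i\<in>Basis. (j \<bullet> i) * pd i f x) = 0" for j by metis
  show ?thesis using z sum_Basis_delta by metis
qed

definition Gf :: "(real \<Rightarrow> 'a \<Rightarrow> real) \<Rightarrow> (real \<Rightarrow> 'a \<Rightarrow> 'a) \<Rightarrow> (real \<Rightarrow> 'a \<Rightarrow> real)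
    \<Rightarrow> real \<Rightarrow> 'a::euclidean_space \<Rightarrow> ('a \<Rightarrow> 'a \<Rightarrow> real) \<Rightarrow> real" where
  "Gf c q b z p N = c z p * Aop (q z p) N + b z p"

definition Nm :: "('a::euclidean_space \<Rightarrow> real) \<Rightarrow> 'a \<Rightarrow> 'a \<Rightarrow> 'a \<Rightarrow> real" where
  "Nm f x = (\<lambda>i j. pd i (pd j f) x)"

definition COEF :: "real set \<Rightarrow> (real \<Rightarrow> 'a \<Rightarrow> real) \<Rightarrow> (real \<Rightarrow> 'a \<Rightarrow> 'a) \<Rightarrow> (real \<Rightarrow> 'a::euclidean_space \<Rightarrow> real) \<Rightarrow> bool" where
  "COEF Z c q b \<longleftrightarrow> (\<forall>m M P Nb. m \<in> Z \<longrightarrow> M \<in> Z \<longrightarrow>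
     (\<exists>c0 \<theta> L. c0 > 0 \<and> \<theta> > 0 \<and> L \<ge> 0 \<and>
       (\<forall>z p. z \<in> {m..M} \<and> norm p \<le> P \<longrightarrow> c z p \<ge> c0 \<and> (norm (q z p))\<^sup>2 \<le> 1 - \<theta>) \<and>
       (\<forall>z p z' p' N. z \<in> {m..M} \<and> norm p \<le> P \<and> z' \<in> {m..M} \<and> norm p' \<le> P \<and>
          (\<forall>i\<in>Basis. \<forall>j\<in>Basis. \<bar>N i j\<bar> \<le> Nb) \<longrightarrow>
          \<bar>Gf c q b z p N - Gf c q b z' p' N\<bar> \<le> L * (\<bar>z - z'\<bar> + norm (p - p')))))"

lemma C2_cont:
  assumes "C2_on U f"
  shows "continuous_on U f" "\<And>i. i \<in> Basis \<Longrightarrow> continuous_on U (pd i f)"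
    "\<And>i j. i \<in> Basis \<Longrightarrow> j \<in> Basis \<Longrightarrow> continuous_on U (pd i (pd j f))"
proof -
  show "continuous_on U f" using assms unfolding C2_on_def
    by (meson continuous_at_imp_continuous_on differentiable_imp_continuous_within)
  show "\<And>i. i \<in> Basis \<Longrightarrow> continuous_on U (pd i f)" using assms unfolding C2_on_def
    by (meson continuous_at_imp_continuous_on differentiable_imp_continuous_within)
  show "\<And>i j. i \<in> Basis \<Longrightarrow> j \<in> Basis \<Longrightarrow> continuous_on U (pd i (pd j f))"
    using assms unfolding C2_on_def by blast
qed

lemma grad_cont: "(\<And>i. i \<in> Basis \<Longrightarrow> continuous_on S (pd i f)) \<Longrightarrow> continuous_on S (grad f)"
  unfolding grad_def by (intro continuous_intros) auto

lemma grad_diff: "grad f x - grad g x = (\<Sum>i\<in>Basis. (pd i f x - pd i g x) *\<^sub>R i)"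
  unfolding grad_def by (simp add: sum_subtractf scaleR_left_diff_distrib)

lemma hb_alt: "hb \<alpha> y R x = exp (- \<alpha> * (dist y x)\<^sup>2) - exp (- \<alpha> * R\<^sup>2)"
  unfolding hb_def by (simp add: dist_norm power2_norm_eq_inner norm_minus_commute)

lemma hb_le1: "\<alpha> \<ge> 0 \<Longrightarrow> hb \<alpha> y R x \<le> exp (- \<alpha> * (dist y x)\<^sup>2)"
  unfolding hb_alt by simp

lemma hb_le: "\<alpha> \<ge> 0 \<Longrightarrow> hb \<alpha> y R x \<le> 1"
proof -
  assume a: "\<alpha> \<ge> 0"
  have "- \<alpha> * (dist y x)\<^sup>2 \<le> 0" using a by simp
  then have "exp (- \<alpha> * (dist y x)\<^sup>2) \<le> 1" by simp
  then show ?thesis using hb_le1[OF a, of y R x] by linarith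
qed

lemma hb_R: "dist y x = R \<Longrightarrow> hb \<alpha> y R x = 0"
  unfolding hb_alt by simp

lemma diff_cmult:
  fixes f :: "'a::real_normed_vector \<Rightarrow> real"
  shows "f differentiable (at x) \<Longrightarrow> (\<lambda>z. c * f z) differentiable (at x)"
  by simp

lemma psi_facts:
  fixes u u' g :: "'a::euclidean_space \<Rightarrow> real" and \<epsilon> :: real
  assumes U: "open U" and Cu: "C2_on U u" and Cu': "C2_on U u'"
    and dg: "\<And>x. g differentiable (at x)" and dpg: "\<And>j x. pd j g differentiable (at x)"
  defines "\<psi> \<equiv> \<lambda>z. u' z - \<epsilon> * g z - u z"
  shows "\<And>z. z \<in> U \<Longrightarrow> \<psi> differentiable (at z)"
    and "\<And>z j. z \<in> U \<Longrightarrow> pd j \<psi> z = pd j u' z - \<epsilon> * pd j g z - pd j u z"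
    and "\<And>z j. z \<in> U \<Longrightarrow> j \<in> Basis \<Longrightarrow> pd j \<psi> differentiable (at z)"
    and "\<And>z i j. z \<in> U \<Longrightarrow> j \<in> Basis \<Longrightarrow>
           pd i (pd j \<psi>) z = pd i (pd j u') z - \<epsilon> * pd i (pd j g) z - pd i (pd j u) z"
proof -
  have du: "\<And>z. z \<in> U \<Longrightarrow> u differentiable (at z)" and du': "\<And>z. z \<in> U \<Longrightarrow> u' differentiable (at z)"
    using Cu Cu' unfolding C2_on_def by auto
  have dpu: "\<And>z j. z \<in> U \<Longrightarrow> j \<in> Basis \<Longrightarrow> pd j u differentiable (at z)"
    and dpu': "\<And>z j. z \<in> U \<Longrightarrow> j \<in> Basis \<Longrightarrow> pd j u' differentiable (at z)"
    using Cu Cu' unfolding C2_on_def by auto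
  show d\<psi>: "\<And>z. z \<in> U \<Longrightarrow> \<psi> differentiable (at z)"
    unfolding \<psi>_def using du du' dg by (intro differentiable_diff diff_cmult) auto
  show pd1: "\<And>z j. z \<in> U \<Longrightarrow> pd j \<psi> z = pd j u' z - \<epsilon> * pd j g z - pd j u z"
  proof -
    fix z j :: 'a assume z: "z \<in> U"
    have a: "(\<lambda>z. u' z - \<epsilon> * g z) differentiable (at z)" using du' z dg by (intro differentiable_diff diff_cmult) auto
    have "pd j \<psi> z = pd j (\<lambda>z. u' z - \<epsilon> * g z) z - pd j u z"
      unfolding \<psi>_def using pd_diff[OF a du[OF z]] by simp
    also have "pd j (\<lambda>z. u' z - \<epsilon> * g z) z = pd j u' z - pd j (\<lambda>z. \<epsilon> * g z) z"
      using pd_diff[OF du'[OF z] diff_cmult[OF dg]] by simp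
    also have "pd j (\<lambda>z. \<epsilon> * g z) z = \<epsilon> * pd j g z" using pd_cmult[OF dg] by simp
    finally show "pd j \<psi> z = pd j u' z - \<epsilon> * pd j g z - pd j u z" .
  qed
  define F where "F j = (\<lambda>z. pd j u' z - \<epsilon> * pd j g z - pd j u z)" for j
  have Fd: "F j differentiable (at z)" if "z \<in> U" "j \<in> Basis" for z j
    unfolding F_def using dpu[OF that] dpu'[OF that] dpg by (intro differentiable_diff diff_cmult) auto
  have FU: "\<And>z. z \<in> U \<Longrightarrow> F j z = pd j \<psi> z" for j using pd1 by (simp add: F_def)
  show "\<And>z j. z \<in> U \<Longrightarrow> j \<in> Basis \<Longrightarrow> pd j \<psi> differentiable (at z)"
  proof -
    fix z j :: 'a assume z: "z \<in> U" and j: "j \<in> Basis"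
    obtain D where "(F j has_derivative D) (at z)" using Fd[OF z j] differentiable_def by blast
    then have "(pd j \<psi> has_derivative D) (at z)"
      using has_derivative_transform_within_open[of "F j" D z UNIV U "pd j \<psi>"] U z FU by blast
    then show "pd j \<psi> differentiable (at z)" using differentiableI by blast
  qed
  show "\<And>z i j. z \<in> U \<Longrightarrow> j \<in> Basis \<Longrightarrow>
           pd i (pd j \<psi>) z = pd i (pd j u') z - \<epsilon> * pd i (pd j g) z - pd i (pd j u) z"
  proof -
    fix z i j :: 'a assume z: "z \<in> U" and j: "j \<in> Basis"
    have "pd i (pd j \<psi>) z = pd i (F j) z" using pd_cong[OF U z, of "pd j \<psi>" "F j" i] FU by metis
    also have "\<dots> = pd i (\<lambda>z. pd j u' z - \<epsilon> * pd j g z) z - pd i (pd j u) z"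
      unfolding F_def using dpu'[OF z j] dpg dpu[OF z j]
      by (intro pd_diff differentiable_diff diff_cmult) auto
    also have "pd i (\<lambda>z. pd j u' z - \<epsilon> * pd j g z) z = pd i (pd j u') z - pd i (\<lambda>z. \<epsilon> * pd j g z) z"
      using dpu'[OF z j] dpg by (intro pd_diff diff_cmult) auto
    also have "pd i (\<lambda>z. \<epsilon> * pd j g z) z = \<epsilon> * pd i (pd j g) z" using dpg by (intro pd_cmult)
    finally show "pd i (pd j \<psi>) z = pd i (pd j u') z - \<epsilon> * pd i (pd j g) z - pd i (pd j u) z" .
  qed
qed

lemma key_point:
  fixes d :: "'a::euclidean_space" and P1 P2 :: 'a
  assumes Gineq: "Gf c q b a P1 N1 \<ge> Gf c q b a' P2 N2"
    and c1: "c a P1 \<ge> c0" "c0 > 0" and qn: "(norm (q a P1))\<^sup>2 \<le> 1 - \<theta>" "\<theta> > 0"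
    and lip: "\<bar>Gf c q b a P1 N2 - Gf c q b a' P2 N2\<bar> \<le> L * (\<bar>a - a'\<bar> + norm (P1 - P2))" "L \<ge> 0"
    and psd: "\<forall>\<xi>. bil (\<lambda>i j. N2 i j - \<epsilon> * H i j - N1 i j) \<xi> \<xi> \<ge> 0"
    and H: "H = (\<lambda>i j. E * (4 * \<alpha>\<^sup>2 * (d \<bullet> i) * (d \<bullet> j) - 2 * \<alpha> * (i \<bullet> j)))"
    and E: "E > 0" and \<alpha>: "\<alpha> \<ge> 0" and \<epsilon>: "\<epsilon> > 0" and \<rho>: "0 \<le> \<rho>" "\<rho> \<le> norm d" and R: "R \<ge> 0"
    and aa: "\<bar>a - a'\<bar> \<le> \<epsilon> * E" and pp: "norm (P1 - P2) \<le> \<epsilon> * (2 * \<alpha> * R * E)"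
    and key: "c0 * (4 * \<alpha>\<^sup>2 * \<rho>\<^sup>2 * \<theta> - 2 * \<alpha> * DIM('a)) > L * (1 + 2 * \<alpha> * R)"
  shows False
proof -
  define A1 where "A1 = Aop (q a P1)"
  define B0 where "B0 = 4 * \<alpha>\<^sup>2 * \<rho>\<^sup>2 * \<theta> - 2 * \<alpha> * DIM('a)"
  have qn1: "norm (q a P1) \<le> 1"
  proof -
    have "(norm (q a P1))\<^sup>2 \<le> 1\<^sup>2" using qn by simp
    then show ?thesis by (rule power2_le_imp_le) simp
  qed
  have "A1 (\<lambda>i j. N2 i j - \<epsilon> * H i j - N1 i j) \<ge> 0"
    unfolding A1_def using Aop_psd[OF psd qn1] .
  then have a1: "A1 N1 \<le> A1 N2 - \<epsilon> * A1 H" unfolding A1_def Aop_lin by simp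
  have a2: "A1 H \<ge> E * B0" unfolding A1_def B0_def
    using Aop_H[OF H _ \<alpha> qn(1) _ \<rho>] E qn by simp
  have LR: "L * (1 + 2 * \<alpha> * R) \<ge> 0"
  proof -
    show ?thesis using lip(2) \<alpha> R by simp
  qed
  have B0: "B0 > 0"
  proof -
    have "c0 * B0 > 0" using key LR unfolding B0_def by linarith
    then show ?thesis using c1(2) by (simp add: zero_less_mult_iff)
  qed
  have g1: "Gf c q b a P1 N1 \<le> Gf c q b a P1 N2 - c a P1 * (\<epsilon> * (E * B0))"
  proof -
    have "A1 N1 \<le> A1 N2 - \<epsilon> * (E * B0)"
      using a1 a2 \<epsilon> by (smt (verit) mult_left_mono)
    then have "c a P1 * A1 N1 \<le> c a P1 * (A1 N2 - \<epsilon> * (E * B0))"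
      using c1 by (intro mult_left_mono) auto
    then show ?thesis unfolding Gf_def A1_def by (simp add: algebra_simps)
  qed
  have g2: "c a P1 * (\<epsilon> * (E * B0)) \<ge> c0 * (\<epsilon> * (E * B0))"
    using c1 \<epsilon> E B0 by (intro mult_right_mono) auto
  have g3: "Gf c q b a P1 N2 \<le> Gf c q b a' P2 N2 + L * (\<epsilon> * E + \<epsilon> * (2 * \<alpha> * R * E))"
  proof -
    have "L * (\<bar>a - a'\<bar> + norm (P1 - P2)) \<le> L * (\<epsilon> * E + \<epsilon> * (2 * \<alpha> * R * E))"
      using aa pp lip(2) by (intro mult_left_mono) auto
    then show ?thesis using lip(1) by linarith
  qed
  have "L * (\<epsilon> * E + \<epsilon> * (2 * \<alpha> * R * E)) = (\<epsilon> * E) * (L * (1 + 2 * \<alpha> * R))"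
    by (simp add: algebra_simps)
  moreover have "c0 * (\<epsilon> * (E * B0)) = (\<epsilon> * E) * (c0 * B0)" by (simp add: algebra_simps)
  moreover have "(\<epsilon> * E) * (L * (1 + 2 * \<alpha> * R)) < (\<epsilon> * E) * (c0 * B0)"
    using key \<epsilon> E unfolding B0_def by (intro mult_strict_left_mono) auto
  ultimately show False using Gineq g1 g2 g3 by linarith
qed

lemma alpha_choice:
  fixes c0 \<rho> \<theta> L R n :: real
  assumes "c0 > 0" "\<rho> > 0" "\<theta> > 0" "L \<ge> 0" "R \<ge> 0" "n \<ge> 0"
  shows "\<exists>\<alpha>\<ge>1. c0 * (4 * \<alpha>\<^sup>2 * \<rho>\<^sup>2 * \<theta> - 2 * \<alpha> * n) > L * (1 + 2 * \<alpha> * R)"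
proof -
  define k where "k = 4 * c0 * \<rho>\<^sup>2 * \<theta>"
  have k: "k > 0" using assms unfolding k_def by simp
  define \<alpha> where "\<alpha> = max 1 ((2 * c0 * n + L + 2 * L * R) / k + 1)"
  have a1: "\<alpha> \<ge> 1" unfolding \<alpha>_def by simp
  have "(2 * c0 * n + L + 2 * L * R) / k < \<alpha>" unfolding \<alpha>_def by simp
  then have "2 * c0 * n + L + 2 * L * R < k * \<alpha>" using k by (simp add: divide_less_eq mult.commute)
  then have "(2 * c0 * n + L + 2 * L * R) * \<alpha> < (k * \<alpha>) * \<alpha>" using a1 by (intro mult_strict_right_mono) auto
  moreover have "L \<le> L * \<alpha>" using a1 assms by (metis mult_le_cancel_left1 not_less)
  ultimately have "2 * c0 * n * \<alpha> + L + 2 * L * R * \<alpha> < k * \<alpha> * \<alpha>" by (simp add: algebra_simps)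
  then have "c0 * (4 * \<alpha>\<^sup>2 * \<rho>\<^sup>2 * \<theta> - 2 * \<alpha> * n) > L * (1 + 2 * \<alpha> * R)"
    unfolding k_def by (simp add: power2_eq_square algebra_simps)
  then show ?thesis using a1 by blast
qed

lemma inner_self_dist: "(x - y) \<bullet> (x - y) = (dist y x)\<^sup>2"
  by (simp add: dist_norm power2_norm_eq_inner norm_minus_commute)

lemma hopf_local:
  fixes u u' :: "'a::euclidean_space \<Rightarrow> real"
  assumes U: "open U" and Cu: "C2_on U u" and Cu': "C2_on U u'"
    and ineq: "\<forall>y\<in>U. Gf c q b (u y) (grad u y) (Nm u y) \<ge> Gf c q b (u' y) (grad u' y) (Nm u' y)"
    and le: "\<forall>y\<in>U. u y \<le> u' y" and Zv: "\<forall>y\<in>U. u y \<in> Z \<and> u' y \<in> Z"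
    and coef: "COEF Z c q b"
    and R: "R > 0" "cball y0 R \<subseteq> U" and pos: "\<forall>z\<in>ball y0 R. u z < u' z"
    and x0: "dist y0 x0 = R" "u x0 = u' x0"
  shows False
proof -
  define K where "K = cball y0 R"
  have K: "compact K" "K \<noteq> {}" "K \<subseteq> U" using R by (auto simp: K_def)
  note cu = C2_cont[OF Cu] and cu' = C2_cont[OF Cu']
  have du: "\<And>z. z \<in> U \<Longrightarrow> u differentiable (at z)" and du': "\<And>z. z \<in> U \<Longrightarrow> u' differentiable (at z)"
    using Cu Cu' unfolding C2_on_def by auto
  obtain pm where pm: "pm \<in> K" "\<forall>z\<in>K. u pm \<le> u z"
    using continuous_attains_inf[OF K(1) K(2) continuous_on_subset[OF cu(1) K(3)]] by blast
  obtain pM where pM: "pM \<in> K" "\<forall>z\<in>K. u' z \<le> u' pM"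
    using continuous_attains_sup[OF K(1) K(2) continuous_on_subset[OF cu'(1) K(3)]] by blast
  define m where "m = u pm"
  define M where "M = u' pM"
  have mZ: "m \<in> Z" "M \<in> Z" using pm pM K Zv by (auto simp: m_def M_def)
  have rng: "u z \<in> {m..M} \<and> u' z \<in> {m..M}" if "z \<in> K" for z
  proof -
    have "u z \<le> u' z" using le K that by auto
    then show ?thesis using pm pM that unfolding m_def M_def by fastforce
  qed
  have gcu: "continuous_on U (grad u)" by (rule grad_cont) (rule cu(2))
  have gcu': "continuous_on U (grad u')" by (rule grad_cont) (rule cu'(2))
  have gc: "continuous_on K (\<lambda>z. norm (grad u z) + norm (grad u' z))"
    using continuous_on_subset[OF gcu K(3)] continuous_on_subset[OF gcu' K(3)]
    by (intro continuous_intros) auto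
  obtain pP where pP: "pP \<in> K" "\<forall>z\<in>K. norm (grad u z) + norm (grad u' z) \<le> norm (grad u pP) + norm (grad u' pP)"
    using continuous_attains_sup[OF K(1) K(2) gc] by blast
  define P where "P = norm (grad u pP) + norm (grad u' pP)"
  have Pb: "norm (grad u z) \<le> P \<and> norm (grad u' z) \<le> P" if "z \<in> K" for z
  proof -
    have "norm (grad u z) + norm (grad u' z) \<le> P" using pP that unfolding P_def by blast
    moreover have "norm (grad u z) \<ge> 0" "norm (grad u' z) \<ge> 0" by auto
    ultimately show ?thesis by linarith
  qed
  have nc: "continuous_on K (\<lambda>z. \<Sum>i\<in>Basis. \<Sum>j\<in>Basis. \<bar>pd i (pd j u') z\<bar>)"
    using K(3) by (intro continuous_intros continuous_on_subset[OF cu'(3)]) auto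
  obtain pN where pN: "pN \<in> K" "\<forall>z\<in>K. (\<Sum>i\<in>Basis. \<Sum>j\<in>Basis. \<bar>pd i (pd j u') z\<bar>)
       \<le> (\<Sum>i\<in>Basis. \<Sum>j\<in>Basis. \<bar>pd i (pd j u') pN\<bar>)"
    using continuous_attains_sup[OF K(1) K(2) nc] by blast
  define Nb where "Nb = (\<Sum>i\<in>Basis. \<Sum>j\<in>Basis. \<bar>pd i (pd j u') pN\<bar>)"
  have Nbd: "\<bar>Nm u' z i j\<bar> \<le> Nb" if "z \<in> K" "i \<in> Basis" "j \<in> Basis" for z i j
  proof -
    have "\<bar>pd i (pd j u') z\<bar> \<le> (\<Sum>j\<in>Basis. \<bar>pd i (pd j u') z\<bar>)"
      using that by (intro member_le_sum) auto
    also have "\<dots> \<le> (\<Sum>i\<in>Basis. \<Sum>j\<in>Basis. \<bar>pd i (pd j u') z\<bar>)"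
      using that by (intro member_le_sum sum_nonneg) auto
    also have "\<dots> \<le> Nb" using pN that unfolding Nb_def by blast
    finally show ?thesis by (simp add: Nm_def)
  qed
  obtain c0 \<theta> L where co: "c0 > 0" "\<theta> > 0" "L \<ge> 0"
    "\<forall>z p. z \<in> {m..M} \<and> norm p \<le> P \<longrightarrow> c z p \<ge> c0 \<and> (norm (q z p))\<^sup>2 \<le> 1 - \<theta>"
    "\<forall>z p z' p' N. z \<in> {m..M} \<and> norm p \<le> P \<and> z' \<in> {m..M} \<and> norm p' \<le> P \<and>
          (\<forall>i\<in>Basis. \<forall>j\<in>Basis. \<bar>N i j\<bar> \<le> Nb) \<longrightarrow>
          \<bar>Gf c q b z p N - Gf c q b z' p' N\<bar> \<le> L * (\<bar>z - z'\<bar> + norm (p - p'))"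
    using coef mZ unfolding COEF_def by blast
  define \<rho> where "\<rho> = R / 2"
  have \<rho>: "\<rho> > 0" "\<rho> < R" using R unfolding \<rho>_def by auto
  define Sph where "Sph = sphere y0 \<rho>"
  have Sph: "compact Sph" "Sph \<noteq> {}" "Sph \<subseteq> ball y0 R" using \<rho> by (auto simp: Sph_def)
  have SphU: "Sph \<subseteq> U" using Sph(3) R(2) ball_subset_cball by blast
  have cv: "continuous_on U (\<lambda>z. u' z - u z)" using cu(1) cu'(1) by (intro continuous_intros)
  obtain ps where ps: "ps \<in> Sph" "\<forall>z\<in>Sph. u' ps - u ps \<le> u' z - u z"
    using continuous_attains_inf[OF Sph(1) Sph(2) continuous_on_subset[OF cv SphU]] by blast
  define m1 where "m1 = u' ps - u ps"
  have m1: "m1 > 0" using pos ps Sph(3) unfolding m1_def by auto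
  obtain \<alpha> where \<alpha>: "\<alpha> \<ge> 1" "c0 * (4 * \<alpha>\<^sup>2 * \<rho>\<^sup>2 * \<theta> - 2 * \<alpha> * DIM('a)) > L * (1 + 2 * \<alpha> * R)"
    using alpha_choice[OF co(1) \<rho>(1) co(2) co(3), of R "real DIM('a)"] R by auto
  define \<epsilon> where "\<epsilon> = m1"
  define h where "h = hb \<alpha> y0 R"
  define \<psi> where "\<psi> = (\<lambda>z. u' z - \<epsilon> * h z - u z)"
  note PF = psi_facts[where g = "hb \<alpha> y0 R" and \<epsilon> = \<epsilon>, OF U Cu Cu' hb_diff pd_hb_diff, folded h_def, folded \<psi>_def]
  have CA: "\<forall>z\<in>K - ball y0 \<rho>. \<psi> z \<ge> 0"
  proof (rule ccontr)
    assume "\<not> (\<forall>z\<in>K - ball y0 \<rho>. \<psi> z \<ge> 0)"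
    then obtain z1 where z1: "z1 \<in> K - ball y0 \<rho>" "\<psi> z1 < 0" by force
    have cmp: "compact (K - ball y0 \<rho>)" using K(1) by (intro compact_diff) auto
    have sub: "K - ball y0 \<rho> \<subseteq> U" using K(3) by auto
    have c\<psi>: "continuous_on U \<psi>"
      using PF(1) by (meson continuous_at_imp_continuous_on differentiable_imp_continuous_within)
    obtain p where p: "p \<in> K - ball y0 \<rho>" "\<forall>z\<in>K - ball y0 \<rho>. \<psi> p \<le> \<psi> z"
      using continuous_attains_inf[OF cmp _ continuous_on_subset[OF c\<psi> sub]] z1 by blast
    have \<psi>p: "\<psi> p < 0" using p z1 by force
    have pU: "p \<in> U" using p sub by auto
    have dp: "\<rho> \<le> dist y0 p" "dist y0 p \<le> R" using p by (auto simp: K_def)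
    have nR: "dist y0 p \<noteq> R"
    proof
      assume "dist y0 p = R"
      then have "h p = 0" unfolding h_def by (rule hb_R)
      then have "\<psi> p = u' p - u p" unfolding \<psi>_def by simp
      with le pU \<psi>p show False by auto
    qed
    have n\<rho>: "dist y0 p \<noteq> \<rho>"
    proof
      assume "dist y0 p = \<rho>"
      then have "p \<in> Sph" by (simp add: Sph_def)
      then have "u' p - u p \<ge> m1" using ps unfolding m1_def by blast
      moreover have "h p \<le> 1" unfolding h_def using \<alpha> by (intro hb_le) auto
      moreover have "\<epsilon> * h p \<le> \<epsilon> * 1" using calculation(2) m1 unfolding \<epsilon>_def by (intro mult_left_mono) auto
      ultimately have "\<psi> p \<ge> 0" unfolding \<psi>_def \<epsilon>_def by simp
      with \<psi>p show False by simp
    qed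
    define Ann where "Ann = ball y0 R - cball y0 \<rho>"
    have Ann: "open Ann" "p \<in> Ann" "Ann \<subseteq> K - ball y0 \<rho>" "Ann \<subseteq> U"
      using dp nR n\<rho> sub by (auto simp: Ann_def K_def)
    have mn: "\<forall>y\<in>Ann. \<psi> p \<le> \<psi> y" using p Ann by blast
    have df: "\<forall>y\<in>Ann. \<psi> differentiable (at y)" using PF(1) Ann by blast
    have dg: "\<forall>j\<in>Basis. pd j \<psi> differentiable (at p)" using PF(3) pU by blast
    note M2 = min2[OF Ann(1) Ann(2) mn df dg]
    have g0: "pd j u p - pd j u' p = - \<epsilon> * pd j h p" if "j \<in> Basis" for j
      using M2(1) that PF(2)[OF pU, of j] by simp
    define E where "E = exp (- \<alpha> * ((p - y0) \<bullet> (p - y0)))"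
    define d where "d = p - y0"
    have E: "E > 0" by (simp add: E_def)
    have Hform: "Nm h p = (\<lambda>i j. E * (4 * \<alpha>\<^sup>2 * (d \<bullet> i) * (d \<bullet> j) - 2 * \<alpha> * (i \<bullet> j)))"
      unfolding Nm_def h_def E_def d_def by (intro ext) (rule pd2_hb)
    have psd: "\<forall>\<xi>. bil (\<lambda>i j. Nm u' p i j - \<epsilon> * Nm h p i j - Nm u p i j) \<xi> \<xi> \<ge> 0"
    proof
      fix \<xi> :: 'a
      have "bil (\<lambda>i j. pd i (pd j \<psi>) p) \<xi> \<xi> = bil (\<lambda>i j. Nm u' p i j - \<epsilon> * Nm h p i j - Nm u p i j) \<xi> \<xi>"
        unfolding bil_def Nm_def
        by (rule sum.cong[OF refl], rule sum.cong[OF refl]) (simp add: PF(4)[OF pU])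
      moreover have "bil (\<lambda>i j. pd i (pd j \<psi>) p) \<xi> \<xi> \<ge> 0"
        using M2(2)[of \<xi>] unfolding bil_def by (simp add: mult.assoc)
      ultimately show "bil (\<lambda>i j. Nm u' p i j - \<epsilon> * Nm h p i j - Nm u p i j) \<xi> \<xi> \<ge> 0" by simp
    qed
    have pK: "p \<in> K" using p by auto
    have hpE: "h p \<le> E" unfolding h_def E_def inner_self_dist using hb_le1[of \<alpha> y0 R p] \<alpha>(1) by simp
    have aa: "\<bar>u p - u' p\<bar> \<le> \<epsilon> * E"
    proof -
      have "u' p - u p < \<epsilon> * h p" using \<psi>p unfolding \<psi>_def by simp
      moreover have "\<epsilon> * h p \<le> \<epsilon> * E" using hpE m1 unfolding \<epsilon>_def by (intro mult_left_mono) auto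
      moreover have "u p \<le> u' p" using le pU by auto
      ultimately show ?thesis by simp
    qed
    have pp: "norm (grad u p - grad u' p) \<le> \<epsilon> * (2 * \<alpha> * R * E)"
    proof -
      have "grad u p - grad u' p = (\<Sum>i\<in>Basis. (- \<epsilon> * pd i h p) *\<^sub>R i)"
        unfolding grad_diff by (rule sum.cong) (simp_all add: g0)
      also have "\<dots> = (\<Sum>i\<in>Basis. (2 * \<alpha> * \<epsilon> * E) *\<^sub>R ((d \<bullet> i) *\<^sub>R i))"
        unfolding h_def pd_hb E_def d_def by (rule sum.cong) (simp_all add: algebra_simps)
      also have "\<dots> = (2 * \<alpha> * \<epsilon> * E) *\<^sub>R (\<Sum>i\<in>Basis. (d \<bullet> i) *\<^sub>R i)"
        by (simp only: scaleR_sum_right)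
      also have "\<dots> = (2 * \<alpha> * \<epsilon> * E) *\<^sub>R d"
        by (simp only: euclidean_representation)
      finally have "norm (grad u p - grad u' p) = \<bar>2 * \<alpha> * \<epsilon> * E\<bar> * norm d" by simp
      also have "\<dots> = (2 * \<alpha> * \<epsilon> * E) * norm d" using \<alpha> m1 E unfolding \<epsilon>_def by simp
      also have "\<dots> \<le> (2 * \<alpha> * \<epsilon> * E) * R"
        using dp \<alpha> m1 E unfolding \<epsilon>_def d_def
        by (intro mult_left_mono) (auto simp: dist_norm norm_minus_commute)
      finally show ?thesis by (simp add: algebra_simps)
    qed
    show False
    proof (rule key_point[where d = d and H = "Nm h p" and E = E and \<alpha> = \<alpha> and \<epsilon> = \<epsilon> and \<rho> = \<rho> and R = R])
      show "Gf c q b (u p) (grad u p) (Nm u p) \<ge> Gf c q b (u' p) (grad u' p) (Nm u' p)" using ineq pU by blast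
      show "c (u p) (grad u p) \<ge> c0" "(norm (q (u p) (grad u p)))\<^sup>2 \<le> 1 - \<theta>"
        using co(4) rng[OF pK] Pb[OF pK] by auto
      show "c0 > 0" "\<theta> > 0" "L \<ge> 0" using co by auto
      show "\<bar>Gf c q b (u p) (grad u p) (Nm u' p) - Gf c q b (u' p) (grad u' p) (Nm u' p)\<bar>
          \<le> L * (\<bar>u p - u' p\<bar> + norm (grad u p - grad u' p))"
        using co(5) rng[OF pK] Pb[OF pK] Nbd[OF pK] by blast
      show "\<forall>\<xi>. bil (\<lambda>i j. Nm u' p i j - \<epsilon> * Nm h p i j - Nm u p i j) \<xi> \<xi> \<ge> 0" by (rule psd)
      show "Nm h p = (\<lambda>i j. E * (4 * \<alpha>\<^sup>2 * (d \<bullet> i) * (d \<bullet> j) - 2 * \<alpha> * (i \<bullet> j)))" by (rule Hform)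
      show "E > 0" by (rule E)
      show "\<alpha> \<ge> 0" using \<alpha> by simp
      show "\<epsilon> > 0" using m1 by (simp add: \<epsilon>_def)
      show "0 \<le> \<rho>" using \<rho> by simp
      show "\<rho> \<le> norm d" using dp by (simp add: d_def dist_norm norm_minus_commute)
      show "R \<ge> 0" using R by simp
      show "\<bar>u p - u' p\<bar> \<le> \<epsilon> * E" by (rule aa)
      show "norm (grad u p - grad u' p) \<le> \<epsilon> * (2 * \<alpha> * R * E)" by (rule pp)
      show "c0 * (4 * \<alpha>\<^sup>2 * \<rho>\<^sup>2 * \<theta> - 2 * \<alpha> * DIM('a)) > L * (1 + 2 * \<alpha> * R)" by (rule \<alpha>(2))
    qed
  qed
  have x0K: "x0 \<in> K" using x0(1) by (simp add: K_def)
  have x0U: "x0 \<in> U" using x0K K(3) by auto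
  have pdv: "\<forall>j\<in>Basis. pd j (\<lambda>z. u' z - u z) x0 = 0"
  proof (rule min1[OF U x0U])
    show "\<forall>y\<in>U. u' x0 - u x0 \<le> u' y - u y" using le x0(2) by auto
    show "(\<lambda>z. u' z - u z) differentiable (at x0)" using du du' x0U by (intro differentiable_diff) auto
  qed
  define E0 where "E0 = exp (- \<alpha> * ((x0 - y0) \<bullet> (x0 - y0)))"
  have pd\<psi>: "pd j \<psi> x0 = 2 * \<alpha> * \<epsilon> * E0 * ((x0 - y0) \<bullet> j)" if j: "j \<in> Basis" for j
  proof -
    have "pd j u' x0 = pd j u x0" using pdv j pd_diff[OF du'[OF x0U] du[OF x0U], of j] by simp
    then show ?thesis using PF(2)[OF x0U, of j] unfolding h_def pd_hb E0_def by (simp add: algebra_simps)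
  qed
  define e where "e = (1/R) *\<^sub>R (y0 - x0)"
  define D where "D = (\<Sum>j\<in>Basis. (e \<bullet> j) * pd j \<psi> (x0 + 0 *\<^sub>R e))"
  have der: "((\<lambda>t. \<psi> (x0 + t *\<^sub>R e)) has_real_derivative D) (at 0)"
    unfolding D_def by (rule line_deriv) (use PF(1) x0U in simp)
  have "D = 2 * \<alpha> * \<epsilon> * E0 * (\<Sum>j\<in>Basis. (e \<bullet> j) * ((x0 - y0) \<bullet> j))"
    unfolding D_def by (simp add: pd\<psi> sum_distrib_left algebra_simps)
  also have "(\<Sum>j\<in>Basis. (e \<bullet> j) * ((x0 - y0) \<bullet> j)) = e \<bullet> (x0 - y0)" by (rule euclidean_inner[symmetric])
  also have "e \<bullet> (x0 - y0) = - R"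
  proof -
    have "e \<bullet> (x0 - y0) = - (1/R) * ((x0 - y0) \<bullet> (x0 - y0))"
      unfolding e_def by (simp add: inner_commute inner_diff_left inner_diff_right algebra_simps)
    also have "(x0 - y0) \<bullet> (x0 - y0) = R\<^sup>2" using x0(1) by (simp add: inner_self_dist)
    finally show ?thesis using R by (simp add: power2_eq_square)
  qed
  finally have "D = - (2 * \<alpha> * \<epsilon> * E0 * R)" by simp
  moreover have "2 * \<alpha> * \<epsilon> * E0 * R > 0" using \<alpha> m1 R by (simp add: \<epsilon>_def E0_def)
  ultimately have Dn: "D < 0" by simp
  obtain d0 where d0: "d0 > 0" "\<forall>t>0. t < d0 \<longrightarrow> \<psi> (x0 + 0 *\<^sub>R e) > \<psi> (x0 + (0 + t) *\<^sub>R e)"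
    using DERIV_neg_dec_right[OF der Dn] by blast
  have \<psi>0: "\<psi> x0 = 0" unfolding \<psi>_def h_def using hb_R[OF x0(1)] x0(2) by simp
  define t where "t = min (d0/2) (R/2)"
  have t: "t > 0" "t < d0" "t \<le> R/2" using d0 R by (auto simp: t_def)
  have "y0 - (x0 + t *\<^sub>R e) = (1 - t/R) *\<^sub>R (y0 - x0)"
    unfolding e_def by (simp add: algebra_simps)
  then have "dist y0 (x0 + t *\<^sub>R e) = \<bar>1 - t/R\<bar> * R"
    using x0(1) by (simp add: dist_norm)
  also have "\<bar>1 - t/R\<bar> = 1 - t/R" using t R by simp
  finally have dt: "dist y0 (x0 + t *\<^sub>R e) = R - t" using R by (simp add: algebra_simps)
  have "x0 + t *\<^sub>R e \<in> K - ball y0 \<rho>" using dt t unfolding K_def \<rho>_def by auto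
  then have "\<psi> (x0 + t *\<^sub>R e) \<ge> 0" using CA by blast
  moreover have "\<psi> x0 > \<psi> (x0 + t *\<^sub>R e)" using d0 t by simp
  ultimately show False using \<psi>0 by simp
qed

lemma comparison:
  fixes u u' :: "'a::euclidean_space \<Rightarrow> real"
  assumes U: "open U" "connected U" and Cu: "C2_on U u" and Cu': "C2_on U u'"
    and ineq: "\<forall>y\<in>U. Gf c q b (u y) (grad u y) (Nm u y) \<ge> Gf c q b (u' y) (grad u' y) (Nm u' y)"
    and le: "\<forall>y\<in>U. u y \<le> u' y" and Zv: "\<forall>y\<in>U. u y \<in> Z \<and> u' y \<in> Z"
    and coef: "COEF Z c q b"
    and x: "x \<in> U" "u x = u' x"
  shows "\<forall>y\<in>U. u y = u' y"
proof -
  note cu = C2_cont[OF Cu] and cu' = C2_cont[OF Cu']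
  have cv: "continuous_on U (\<lambda>z. u' z - u z)" using cu(1) cu'(1) by (intro continuous_intros)
  define Z0 where "Z0 = {z\<in>U. u z = u' z}"
  define W where "W = U \<inter> (\<lambda>z. u' z - u z) -` {0<..}"
  have Wo: "open W" unfolding W_def using continuous_open_preimage[OF cv U(1)] by simp
  have Z0o: "open Z0"
  proof (rule openI)
    fix x1 assume x1: "x1 \<in> Z0"
    then have x1U: "x1 \<in> U" by (simp add: Z0_def)
    obtain e where e: "e > 0" "cball x1 e \<subseteq> U" using U(1) x1U open_contains_cball by blast
    define r where "r = e / 2"
    have r: "r > 0" "cball x1 (2 * r) \<subseteq> U" using e by (auto simp: r_def)
    have "ball x1 r \<subseteq> Z0"
    proof
      fix y assume y: "y \<in> ball x1 r"
      show "y \<in> Z0"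
      proof (rule ccontr)
        assume yn: "y \<notin> Z0"
        define S' where "S' = {z \<in> cball x1 (2 * r). u' z - u z = 0}"
        have S'c: "closed S'" unfolding S'_def
          using continuous_on_subset[OF cv r(2)] by (intro continuous_closed_preimage_constant) auto
        have x1S: "x1 \<in> S'" using x1 r by (simp add: S'_def Z0_def)
        obtain x0 where x0: "x0 \<in> S'" "\<And>z. z \<in> S' \<Longrightarrow> dist y x0 \<le> dist y z"
          using distance_attains_inf[OF S'c] x1S by blast
        define R where "R = dist y x0"
        have yU: "y \<in> U" using y r by (auto simp: dist_commute)
        have x0U: "x0 \<in> U" using x0(1) r(2) by (auto simp: S'_def)
        have eqx0: "u x0 = u' x0" using x0(1) by (simp add: S'_def)
        have Rr: "R < r" using x0(2)[OF x1S] y by (simp add: R_def dist_commute)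
        have Rp: "R > 0"
        proof -
          have "y \<noteq> x0" using yn eqx0 x0U by (auto simp: Z0_def)
          then show ?thesis by (simp add: R_def)
        qed
        have cb: "cball y R \<subseteq> cball x1 (2 * r)"
        proof
          fix z assume "z \<in> cball y R"
          then have "dist x1 z \<le> dist x1 y + dist y z" "dist y z \<le> R" "dist x1 y < r"
            using y by (auto intro: dist_triangle)
          then show "z \<in> cball x1 (2 * r)" using Rr by simp
        qed
        have pos: "\<forall>z\<in>ball y R. u z < u' z"
        proof
          fix z assume z: "z \<in> ball y R"
          then have "z \<in> cball y R" by simp
          then have zc: "z \<in> cball x1 (2 * r)" using cb by blast
          then have zU: "z \<in> U" using r(2) by auto
          have "u z \<noteq> u' z"
          proof
            assume "u z = u' z"
            then have "z \<in> S'" using zc by (simp add: S'_def)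
            then have "dist y x0 \<le> dist y z" by (rule x0(2))
            with z show False by (simp add: R_def)
          qed
          moreover have "u z \<le> u' z" using le zU by blast
          ultimately show "u z < u' z" by linarith
        qed
        have cbU: "cball y R \<subseteq> U" using cb r(2) by blast
        have dx0: "dist y x0 = R" by (simp add: R_def)
        show False by (rule hopf_local[OF U(1) Cu Cu' ineq le Zv coef Rp cbU pos dx0 eqx0])
      qed
    qed
    then show "\<exists>e>0. ball x1 e \<subseteq> Z0" using r by blast
  qed
  have "Z0 \<inter> W \<inter> U = {}" by (auto simp: Z0_def W_def)
  moreover have "U \<subseteq> Z0 \<union> W" using le by (force simp: Z0_def W_def)
  ultimately have "Z0 \<inter> U = {} \<or> W \<inter> U = {}" using connectedD[OF U(2) Z0o Wo] by blast
  moreover have "x \<in> Z0 \<inter> U" using x by (simp add: Z0_def)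
  ultimately have "W \<inter> U = {}" by blast
  then show ?thesis using le by (force simp: W_def)
qed

definition inbox :: "real \<Rightarrow> real \<Rightarrow> real \<Rightarrow> real \<Rightarrow> 'a::euclidean_space \<Rightarrow> bool" where
  "inbox m M P z p \<longleftrightarrow> z \<in> {m..M} \<and> norm p \<le> P"

definition LB :: "real \<Rightarrow> real \<Rightarrow> real \<Rightarrow> (real \<Rightarrow> 'a::euclidean_space \<Rightarrow> real) \<Rightarrow> bool" where
  "LB m M P f \<longleftrightarrow> (\<exists>K. \<forall>z p. inbox m M P z p \<longrightarrow> \<bar>f z p\<bar> \<le> K) \<and>
     (\<exists>L. \<forall>z p z' p'. inbox m M P z p \<and> inbox m M P z' p' \<longrightarrow> \<bar>f z p - f z' p'\<bar> \<le> L * (\<bar>z - z'\<bar> + norm (p - p')))"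

lemma LB_I:
  assumes "\<And>z p. inbox m M P z p \<Longrightarrow> \<bar>f z p\<bar> \<le> K"
    and "\<And>z p z' p'. inbox m M P z p \<Longrightarrow> inbox m M P z' p' \<Longrightarrow> \<bar>f z p - f z' p'\<bar> \<le> L * (\<bar>z - z'\<bar> + norm (p - p'))"
  shows "LB m M P f"
  unfolding LB_def using assms by blast

lemma LB_E:
  assumes "LB m M P f"
  obtains K L where "K \<ge> 0" "L \<ge> 0" "\<And>z p. inbox m M P z p \<Longrightarrow> \<bar>f z p\<bar> \<le> K"
    "\<And>z p z' p'. inbox m M P z p \<Longrightarrow> inbox m M P z' p' \<Longrightarrow> \<bar>f z p - f z' p'\<bar> \<le> L * (\<bar>z - z'\<bar> + norm (p - p'))"
proof -
  obtain K L where K: "\<And>z p. inbox m M P z p \<Longrightarrow> \<bar>f z p\<bar> \<le> K"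
    and L: "\<And>z p z' p'. inbox m M P z p \<Longrightarrow> inbox m M P z' p' \<Longrightarrow> \<bar>f z p - f z' p'\<bar> \<le> L * (\<bar>z - z'\<bar> + norm (p - p'))"
    using assms unfolding LB_def by blast
  have K': "\<bar>f z p\<bar> \<le> max K 0" if "inbox m M P z p" for z p using K[OF that] by simp
  have L': "\<bar>f z p - f z' p'\<bar> \<le> max L 0 * (\<bar>z - z'\<bar> + norm (p - p'))"
    if "inbox m M P z p" "inbox m M P z' p'" for z p z' p'
  proof -
    have "L * (\<bar>z - z'\<bar> + norm (p - p')) \<le> max L 0 * (\<bar>z - z'\<bar> + norm (p - p'))"
      by (intro mult_right_mono) auto
    then show ?thesis using L[OF that] by linarith
  qed
  show ?thesis using that[of "max K 0" "max L 0"] K' L' by auto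
qed

lemma LB_const: "LB m M P (\<lambda>z p. k)"
  by (rule LB_I[where K = "\<bar>k\<bar>" and L = 0]) auto

lemma LB_z: "LB m M P (\<lambda>z p. z)"
proof (rule LB_I[where K = "\<bar>m\<bar> + \<bar>M\<bar>" and L = 1])
  fix z :: real and p :: 'a assume "inbox m M P z p"
  then show "\<bar>z\<bar> \<le> \<bar>m\<bar> + \<bar>M\<bar>" by (auto simp: inbox_def)
next
  fix z z' :: real and p p' :: 'a
  show "\<bar>z - z'\<bar> \<le> 1 * (\<bar>z - z'\<bar> + norm (p - p'))" by simp
qed

lemma LB_inner: "LB m M P (\<lambda>z p. p \<bullet> v)"
proof (rule LB_I[where K = "P * norm v" and L = "norm v"])
  fix z :: real and p :: 'a assume "inbox m M P z p"
  then have "norm p \<le> P" by (simp add: inbox_def)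
  then show "\<bar>p \<bullet> v\<bar> \<le> P * norm v"
    using Cauchy_Schwarz_ineq2[of p v] by (meson mult_right_mono norm_ge_zero order_trans)
next
  fix z z' :: real and p p' :: 'a
  have "\<bar>p \<bullet> v - p' \<bullet> v\<bar> = \<bar>(p - p') \<bullet> v\<bar>" by (simp add: inner_diff_left)
  also have "\<dots> \<le> norm (p - p') * norm v" by (rule Cauchy_Schwarz_ineq2)
  also have "\<dots> \<le> norm v * (\<bar>z - z'\<bar> + norm (p - p'))" by (simp add: mult.commute mult_left_mono)
  finally show "\<bar>p \<bullet> v - p' \<bullet> v\<bar> \<le> norm v * (\<bar>z - z'\<bar> + norm (p - p'))" .
qed

lemma LB_add: "LB m M P f \<Longrightarrow> LB m M P g \<Longrightarrow> LB m M P (\<lambda>z p. f z p + g z p)"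
proof -
  assume "LB m M P f" "LB m M P g"
  then obtain Kf Lf Kg Lg where f: "\<And>z p. inbox m M P z p \<Longrightarrow> \<bar>f z p\<bar> \<le> Kf"
    "\<And>z p z' p'. inbox m M P z p \<Longrightarrow> inbox m M P z' p' \<Longrightarrow> \<bar>f z p - f z' p'\<bar> \<le> Lf * (\<bar>z - z'\<bar> + norm (p - p'))"
    and g: "\<And>z p. inbox m M P z p \<Longrightarrow> \<bar>g z p\<bar> \<le> Kg"
    "\<And>z p z' p'. inbox m M P z p \<Longrightarrow> inbox m M P z' p' \<Longrightarrow> \<bar>g z p - g z' p'\<bar> \<le> Lg * (\<bar>z - z'\<bar> + norm (p - p'))"
    by (metis LB_E)
  show ?thesis
  proof (rule LB_I[where K = "Kf + Kg" and L = "Lf + Lg"])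
    fix z :: real and p :: 'a assume "inbox m M P z p"
    then show "\<bar>f z p + g z p\<bar> \<le> Kf + Kg" using f(1) g(1) by (smt (verit))
  next
    fix z z' :: real and p p' :: 'a assume a: "inbox m M P z p" "inbox m M P z' p'"
    show "\<bar>f z p + g z p - (f z' p' + g z' p')\<bar> \<le> (Lf + Lg) * (\<bar>z - z'\<bar> + norm (p - p'))"
      using f(2)[OF a] g(2)[OF a] by (simp add: algebra_simps)
  qed
qed

lemma LB_neg: "LB m M P f \<Longrightarrow> LB m M P (\<lambda>z p. - f z p)"
  unfolding LB_def by (simp add: abs_minus_commute)

lemma LB_diff: "LB m M P f \<Longrightarrow> LB m M P g \<Longrightarrow> LB m M P (\<lambda>z p. f z p - g z p)"
  using LB_add[of m M P f "\<lambda>z p. - g z p"] LB_neg[of m M P g] by simp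

lemma LB_mult: "LB m M P f \<Longrightarrow> LB m M P g \<Longrightarrow> LB m M P (\<lambda>z p. f z p * g z p)"
proof -
  assume "LB m M P f" "LB m M P g"
  then obtain Kf Lf Kg Lg where f: "Kf \<ge> 0" "Lf \<ge> 0" "\<And>z p. inbox m M P z p \<Longrightarrow> \<bar>f z p\<bar> \<le> Kf"
    "\<And>z p z' p'. inbox m M P z p \<Longrightarrow> inbox m M P z' p' \<Longrightarrow> \<bar>f z p - f z' p'\<bar> \<le> Lf * (\<bar>z - z'\<bar> + norm (p - p'))"
    and g: "Kg \<ge> 0" "Lg \<ge> 0" "\<And>z p. inbox m M P z p \<Longrightarrow> \<bar>g z p\<bar> \<le> Kg"
    "\<And>z p z' p'. inbox m M P z p \<Longrightarrow> inbox m M P z' p' \<Longrightarrow> \<bar>g z p - g z' p'\<bar> \<le> Lg * (\<bar>z - z'\<bar> + norm (p - p'))"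
    by (metis LB_E)
  show ?thesis
  proof (rule LB_I[where K = "Kf * Kg" and L = "Kf * Lg + Kg * Lf"])
    fix z :: real and p :: 'a assume a: "inbox m M P z p"
    show "\<bar>f z p * g z p\<bar> \<le> Kf * Kg" unfolding abs_mult using f(3)[OF a] g(3)[OF a]
      by (intro mult_mono) auto
  next
    fix z z' :: real and p p' :: 'a assume a: "inbox m M P z p" "inbox m M P z' p'"
    define d where "d = \<bar>z - z'\<bar> + norm (p - p')"
    have "f z p * g z p - f z' p' * g z' p' = f z p * (g z p - g z' p') + g z' p' * (f z p - f z' p')"
      by (simp add: algebra_simps)
    then have "\<bar>f z p * g z p - f z' p' * g z' p'\<bar> \<le> \<bar>f z p\<bar> * \<bar>g z p - g z' p'\<bar> + \<bar>g z' p'\<bar> * \<bar>f z p - f z' p'\<bar>"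
      by (metis abs_mult abs_triangle_ineq)
    also have "\<dots> \<le> Kf * (Lg * d) + Kg * (Lf * d)"
      using f(3)[OF a(1)] g(4)[OF a] g(3)[OF a(2)] f(4)[OF a] f(1) g(1) unfolding d_def
      by (intro add_mono mult_mono) auto
    finally show "\<bar>f z p * g z p - f z' p' * g z' p'\<bar> \<le> (Kf * Lg + Kg * Lf) * (\<bar>z - z'\<bar> + norm (p - p'))"
      unfolding d_def by (simp add: algebra_simps)
  qed
qed

lemma LB_inv:
  assumes "LB m M P f" "k > 0" "\<And>z p. inbox m M P z p \<Longrightarrow> f z p \<ge> k"
  shows "LB m M P (\<lambda>z p. 1 / f z p)"
proof -
  obtain Kf Lf where f: "Lf \<ge> 0"
    "\<And>z p z' p'. inbox m M P z p \<Longrightarrow> inbox m M P z' p' \<Longrightarrow> \<bar>f z p - f z' p'\<bar> \<le> Lf * (\<bar>z - z'\<bar> + norm (p - p'))"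
    using assms(1) by (metis LB_E)
  show ?thesis
  proof (rule LB_I[where K = "1/k" and L = "Lf / k\<^sup>2"])
    fix z :: real and p :: 'a assume a: "inbox m M P z p"
    show "\<bar>1 / f z p\<bar> \<le> 1 / k" using assms(3)[OF a] assms(2) by (simp add: frac_le)
  next
    fix z z' :: real and p p' :: 'a assume a: "inbox m M P z p" "inbox m M P z' p'"
    have f1: "f z p \<ge> k" "f z' p' \<ge> k" using assms(3) a by auto
    have "1 / f z p - 1 / f z' p' = (f z' p' - f z p) / (f z p * f z' p')"
      using f1 assms(2) by (simp add: field_simps)
    then have "\<bar>1 / f z p - 1 / f z' p'\<bar> = \<bar>f z p - f z' p'\<bar> / (f z p * f z' p')"
      using f1 assms(2) by (simp add: abs_minus_commute)
    also have "\<dots> \<le> \<bar>f z p - f z' p'\<bar> / k\<^sup>2"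
    proof (rule divide_left_mono)
      show "k\<^sup>2 \<le> f z p * f z' p'" using f1 assms(2) by (simp add: power2_eq_square mult_mono)
      show "0 < f z p * f z' p' * k\<^sup>2" using f1 assms(2) by simp
    qed simp
    also have "\<dots> \<le> Lf * (\<bar>z - z'\<bar> + norm (p - p')) / k\<^sup>2"
      using f(2)[OF a] by (simp add: divide_right_mono)
    finally show "\<bar>1 / f z p - 1 / f z' p'\<bar> \<le> Lf / k\<^sup>2 * (\<bar>z - z'\<bar> + norm (p - p'))" by simp
  qed
qed

lemma LB_sqrt:
  assumes "LB m M P f" "k > 0" "\<And>z p. inbox m M P z p \<Longrightarrow> f z p \<ge> k"
  shows "LB m M P (\<lambda>z p. sqrt (f z p))"
proof -
  obtain Kf Lf where f: "Kf \<ge> 0" "Lf \<ge> 0" "\<And>z p. inbox m M P z p \<Longrightarrow> \<bar>f z p\<bar> \<le> Kf"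
    "\<And>z p z' p'. inbox m M P z p \<Longrightarrow> inbox m M P z' p' \<Longrightarrow> \<bar>f z p - f z' p'\<bar> \<le> Lf * (\<bar>z - z'\<bar> + norm (p - p'))"
    using assms(1) by (metis LB_E)
  show ?thesis
  proof (rule LB_I[where K = "sqrt Kf" and L = "Lf / (2 * sqrt k)"])
    fix z :: real and p :: 'a assume a: "inbox m M P z p"
    have "\<bar>sqrt (f z p)\<bar> = sqrt \<bar>f z p\<bar>" by (simp add: real_sqrt_abs')
    then show "\<bar>sqrt (f z p)\<bar> \<le> sqrt Kf" using f(3)[OF a] by simp
  next
    fix z z' :: real and p p' :: 'a assume a: "inbox m M P z p" "inbox m M P z' p'"
    have f1: "f z p \<ge> k" "f z' p' \<ge> k" using assms(3) a by auto
    have s1: "sqrt (f z p) \<ge> sqrt k" "sqrt (f z' p') \<ge> sqrt k" using f1 by auto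
    have sk: "sqrt k > 0" using assms(2) by simp
    have "(sqrt (f z p) - sqrt (f z' p')) * (sqrt (f z p) + sqrt (f z' p')) = f z p - f z' p'"
      using f1 assms(2) by (simp add: algebra_simps)
    then have "\<bar>sqrt (f z p) - sqrt (f z' p')\<bar> * (sqrt (f z p) + sqrt (f z' p')) = \<bar>f z p - f z' p'\<bar>"
      using s1 sk by (metis abs_mult abs_of_pos add_pos_pos order_less_le_trans)
    moreover have "2 * sqrt k \<le> sqrt (f z p) + sqrt (f z' p')" using s1 by linarith
    ultimately have "\<bar>sqrt (f z p) - sqrt (f z' p')\<bar> * (2 * sqrt k) \<le> \<bar>f z p - f z' p'\<bar>"
      by (metis abs_ge_zero mult_left_mono)
    then have "\<bar>sqrt (f z p) - sqrt (f z' p')\<bar> \<le> \<bar>f z p - f z' p'\<bar> / (2 * sqrt k)"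
      using sk by (simp add: le_divide_eq)
    also have "\<dots> \<le> Lf * (\<bar>z - z'\<bar> + norm (p - p')) / (2 * sqrt k)"
      using f(4)[OF a] sk by (simp add: divide_right_mono)
    finally show "\<bar>sqrt (f z p) - sqrt (f z' p')\<bar> \<le> Lf / (2 * sqrt k) * (\<bar>z - z'\<bar> + norm (p - p'))" by simp
  qed
qed

lemma LB_sum: "finite I \<Longrightarrow> (\<And>i. i \<in> I \<Longrightarrow> LB m M P (f i)) \<Longrightarrow> LB m M P (\<lambda>z p. \<Sum>i\<in>I. f i z p)"
proof (induction I rule: finite_induct)
  case empty then show ?case using LB_const[of m M P 0] by simp
next
  case (insert x F)
  then show ?case using LB_add[of m M P "f x" "\<lambda>z p. \<Sum>i\<in>F. f i z p"] by simp
qed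

lemma LB_wsum:
  fixes f :: "'i \<Rightarrow> real \<Rightarrow> 'a::euclidean_space \<Rightarrow> real"
  assumes "finite I" "\<And>i. i \<in> I \<Longrightarrow> LB m M P (f i)"
  shows "\<exists>L. \<forall>w z p z' p'. (\<forall>i\<in>I. \<bar>w i\<bar> \<le> W) \<and> inbox m M P z p \<and> inbox m M P z' p' \<longrightarrow>
     \<bar>(\<Sum>i\<in>I. w i * f i z p) - (\<Sum>i\<in>I. w i * f i z' p')\<bar> \<le> L * (\<bar>z - z'\<bar> + norm (p - p'))"
  using assms
proof (induction I rule: finite_induct)
  case empty then show ?case by (intro exI[of _ 0]) simp
next
  case (insert x F)
  obtain L1 where L1: "\<forall>w z p z' p'. (\<forall>i\<in>F. \<bar>w i\<bar> \<le> W) \<and> inbox m M P z p \<and> inbox m M P z' p' \<longrightarrow>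
     \<bar>(\<Sum>i\<in>F. w i * f i z p) - (\<Sum>i\<in>F. w i * f i z' p')\<bar> \<le> L1 * (\<bar>z - z'\<bar> + norm (p - p'))"
    using insert by blast
  obtain Kx Lx where x: "Lx \<ge> 0"
    "\<And>z p z' p'. inbox m M P z p \<Longrightarrow> inbox m M P z' p' \<Longrightarrow> \<bar>f x z p - f x z' p'\<bar> \<le> Lx * (\<bar>z - z'\<bar> + norm (p - p'))"
    using insert.prems[of x] by (metis LB_E insertI1)
  show ?case
  proof (rule exI[of _ "L1 + \<bar>W\<bar> * Lx"], intro allI impI)
    fix w and z z' :: real and p p' :: 'a assume a: "(\<forall>i\<in>insert x F. \<bar>w i\<bar> \<le> W) \<and> inbox m M P z p \<and> inbox m M P z' p'"
    define d where "d = \<bar>z - z'\<bar> + norm (p - p')"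
    have d: "d \<ge> 0" by (simp add: d_def)
    have h1: "\<bar>(\<Sum>i\<in>F. w i * f i z p) - (\<Sum>i\<in>F. w i * f i z' p')\<bar> \<le> L1 * d"
      using L1 a unfolding d_def by blast
    have "\<bar>w x * f x z p - w x * f x z' p'\<bar> = \<bar>w x\<bar> * \<bar>f x z p - f x z' p'\<bar>"
      by (simp add: abs_mult[symmetric] algebra_simps)
    also have "\<dots> \<le> \<bar>W\<bar> * (Lx * d)"
      using a x(2)[of z p z' p'] unfolding d_def by (intro mult_mono) auto
    finally have h2: "\<bar>w x * f x z p - w x * f x z' p'\<bar> \<le> \<bar>W\<bar> * (Lx * d)" .
    have "(\<Sum>i\<in>insert x F. w i * f i z p) - (\<Sum>i\<in>insert x F. w i * f i z' p')
      = (w x * f x z p - w x * f x z' p') + ((\<Sum>i\<in>F. w i * f i z p) - (\<Sum>i\<in>F. w i * f i z' p'))"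
      using insert.hyps by simp
    then show "\<bar>(\<Sum>i\<in>insert x F. w i * f i z p) - (\<Sum>i\<in>insert x F. w i * f i z' p')\<bar>
        \<le> (L1 + \<bar>W\<bar> * Lx) * (\<bar>z - z'\<bar> + norm (p - p'))"
      using h1 h2 unfolding d_def[symmetric] by (simp add: algebra_simps)
  qed
qed

definition Fk :: "(real \<Rightarrow> 'a \<Rightarrow> real) \<Rightarrow> (real \<Rightarrow> 'a \<Rightarrow> 'a) \<Rightarrow> 'a::euclidean_space \<times> 'a \<Rightarrow> real \<Rightarrow> 'a \<Rightarrow> real" where
  "Fk c q kl z p = c z p * ((if fst kl = snd kl then 1 else 0) - (q z p \<bullet> fst kl) * (q z p \<bullet> snd kl))"

lemma Gf_wsum: "Gf c q b z p N = (\<Sum>kl\<in>Basis \<times> Basis. N (fst kl) (snd kl) * Fk c q kl z p) + b z p"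
proof -
  have "(\<Sum>kl\<in>Basis \<times> Basis. N (fst kl) (snd kl) * Fk c q kl z p)
      = (\<Sum>k\<in>Basis. \<Sum>l\<in>Basis. N k l * Fk c q (k, l) z p)"
    by (simp add: sum.cartesian_product case_prod_beta)
  also have "\<dots> = (\<Sum>k\<in>Basis. \<Sum>l\<in>Basis. c z p * (if l = k then N k l else 0)
        - c z p * ((q z p \<bullet> k) * (q z p \<bullet> l) * N k l))"
    unfolding Fk_def by (rule sum.cong[OF refl], rule sum.cong[OF refl]) (auto simp: algebra_simps)
  also have "\<dots> = c z p * (\<Sum>k\<in>Basis. \<Sum>l\<in>Basis. if l = k then N k l else 0) - c z p * bil N (q z p) (q z p)"
    unfolding bil_def by (simp only: sum_subtractf sum_distrib_left)
  also have "(\<Sum>k\<in>Basis. \<Sum>l\<in>Basis. if l = k then N k l else 0) = (\<Sum>k\<in>Basis. N k k)"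
    by (rule sum.cong) (simp_all add: sum.delta)
  finally show ?thesis unfolding Gf_def Aop_def by (simp add: algebra_simps)
qed

lemma COEF_from_LB:
  assumes H: "\<And>m M P. m \<in> Z \<Longrightarrow> M \<in> Z \<Longrightarrow> LB m M P c \<and> LB m M P b \<and> (\<forall>k\<in>Basis. LB m M P (\<lambda>z p. q z p \<bullet> k)) \<and>
     (\<exists>c0 \<theta>. c0 > 0 \<and> \<theta> > 0 \<and> (\<forall>z p. z \<in> {m..M} \<and> norm p \<le> P \<longrightarrow> c z p \<ge> c0 \<and> (norm (q z p))\<^sup>2 \<le> 1 - \<theta>))"
  shows "COEF Z c q b"
  unfolding COEF_def
proof (intro allI impI)
  fix m M P Nb assume mZ: "m \<in> Z" "M \<in> Z"
  note h = H[OF mZ]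
  obtain c0 \<theta> where ct: "c0 > 0" "\<theta> > 0" "\<forall>z p. z \<in> {m..M} \<and> norm p \<le> P \<longrightarrow> c z p \<ge> c0 \<and> (norm (q z p))\<^sup>2 \<le> 1 - \<theta>"
    using h by blast
  have FL: "LB m M P (Fk c q kl)" if "kl \<in> Basis \<times> Basis" for kl
  proof -
    have "LB m M P (\<lambda>z p. c z p * ((if fst kl = snd kl then 1 else 0) - (q z p \<bullet> fst kl) * (q z p \<bullet> snd kl)))"
      using h that by (intro LB_mult LB_diff LB_const) auto
    then show ?thesis unfolding Fk_def .
  qed
  obtain L1 where L1: "\<forall>w z p z' p'. (\<forall>i\<in>Basis \<times> Basis. \<bar>w i\<bar> \<le> Nb) \<and> inbox m M P z p \<and> inbox m M P z' p' \<longrightarrow>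
     \<bar>(\<Sum>i\<in>Basis \<times> Basis. w i * Fk c q i z p) - (\<Sum>i\<in>Basis \<times> Basis. w i * Fk c q i z' p')\<bar> \<le> L1 * (\<bar>z - z'\<bar> + norm (p - p'))"
    using LB_wsum[of "Basis \<times> Basis" m M P "Fk c q" Nb, OF _ FL] by auto
  obtain Kb Lb where Lb: "\<And>z p z' p'. inbox m M P z p \<Longrightarrow> inbox m M P z' p' \<Longrightarrow> \<bar>b z p - b z' p'\<bar> \<le> Lb * (\<bar>z - z'\<bar> + norm (p - p'))"
    using h by (metis LB_E)
  define L where "L = max 0 (L1 + Lb)"
  show "\<exists>c0 \<theta> L. c0 > 0 \<and> \<theta> > 0 \<and> L \<ge> 0 \<and>
       (\<forall>z p. z \<in> {m..M} \<and> norm p \<le> P \<longrightarrow> c z p \<ge> c0 \<and> (norm (q z p))\<^sup>2 \<le> 1 - \<theta>) \<and>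
       (\<forall>z p z' p' N. z \<in> {m..M} \<and> norm p \<le> P \<and> z' \<in> {m..M} \<and> norm p' \<le> P \<and>
          (\<forall>i\<in>Basis. \<forall>j\<in>Basis. \<bar>N i j\<bar> \<le> Nb) \<longrightarrow>
          \<bar>Gf c q b z p N - Gf c q b z' p' N\<bar> \<le> L * (\<bar>z - z'\<bar> + norm (p - p')))"
  proof (intro exI conjI allI impI)
    show "c0 > 0" "\<theta> > 0" "L \<ge> 0" using ct by (auto simp: L_def)
    show "\<And>z p. z \<in> {m..M} \<and> norm p \<le> P \<Longrightarrow> c z p \<ge> c0" "\<And>z p. z \<in> {m..M} \<and> norm p \<le> P \<Longrightarrow> (norm (q z p))\<^sup>2 \<le> 1 - \<theta>"
      using ct by auto
    fix z z' :: real and p p' :: 'a and N :: "'a \<Rightarrow> 'a \<Rightarrow> real"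
    assume a: "z \<in> {m..M} \<and> norm p \<le> P \<and> z' \<in> {m..M} \<and> norm p' \<le> P \<and> (\<forall>i\<in>Basis. \<forall>j\<in>Basis. \<bar>N i j\<bar> \<le> Nb)"
    have ib: "inbox m M P z p" "inbox m M P z' p'" using a by (auto simp: inbox_def)
    have w: "\<forall>i\<in>Basis \<times> Basis. \<bar>N (fst i) (snd i)\<bar> \<le> Nb" using a by auto
    have s1: "\<bar>(\<Sum>i\<in>Basis \<times> Basis. N (fst i) (snd i) * Fk c q i z p) - (\<Sum>i\<in>Basis \<times> Basis. N (fst i) (snd i) * Fk c q i z' p')\<bar>
       \<le> L1 * (\<bar>z - z'\<bar> + norm (p - p'))"
      using L1[rule_format, of "\<lambda>i. N (fst i) (snd i)" z p z' p'] w ib by blast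
    have s2: "\<bar>b z p - b z' p'\<bar> \<le> Lb * (\<bar>z - z'\<bar> + norm (p - p'))" using Lb ib by blast
    have "\<bar>Gf c q b z p N - Gf c q b z' p' N\<bar> \<le> (L1 + Lb) * (\<bar>z - z'\<bar> + norm (p - p'))"
      unfolding Gf_wsum using s1 s2 by (simp add: algebra_simps)
    also have "\<dots> \<le> L * (\<bar>z - z'\<bar> + norm (p - p'))" unfolding L_def by (intro mult_right_mono) auto
    finally show "\<bar>Gf c q b z p N - Gf c q b z' p' N\<bar> \<le> L * (\<bar>z - z'\<bar> + norm (p - p'))" .
  qed
qed

definition c1 :: "real \<Rightarrow> 'a::euclidean_space \<Rightarrow> real" where "c1 z p = 1"
definition q1 :: "real \<Rightarrow> 'a::euclidean_space \<Rightarrow> 'a" where "q1 z p = (1 / sqrt (1 + (norm p)\<^sup>2)) *\<^sub>R p"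
definition b1 :: "real \<Rightarrow> 'a::euclidean_space \<Rightarrow> real" where "b1 z p = (norm p)\<^sup>2"

lemma bil_scale: "bil N (s *\<^sub>R p) (s *\<^sub>R p) = s\<^sup>2 * bil N p p"
  unfolding bil_def by (simp add: sum_distrib_left power2_eq_square algebra_simps)

lemma Qop_Gf: "Qop w y = Gf c1 q1 b1 (w y) (grad w y) (Nm w y)"
proof -
  let ?p = "grad w y"
  have pos: "1 + (norm ?p)\<^sup>2 > 0" by (simp add: add_pos_nonneg)
  have s2: "(1 / sqrt (1 + (norm ?p)\<^sup>2))\<^sup>2 = 1 / (1 + (norm ?p)\<^sup>2)"
    using pos by (simp add: power_divide)
  have hb: "hess_grad_grad w y = bil (Nm w y) ?p ?p"
    unfolding hess_grad_grad_def bil_def Nm_def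
    by (rule sum.cong[OF refl], rule sum.cong[OF refl]) (simp add: grad_inner algebra_simps)
  have "bil (Nm w y) (q1 (w y) ?p) (q1 (w y) ?p) = hess_grad_grad w y / (1 + (norm ?p)\<^sup>2)"
    unfolding q1_def bil_scale s2 hb by simp
  moreover have "lap w y = (\<Sum>i\<in>Basis. Nm w y i i)" by (simp add: lap_def Nm_def)
  ultimately show ?thesis unfolding Qop_def Gf_def Aop_def c1_def b1_def by simp
qed

lemma LB_normsq: "LB m M P (\<lambda>z (p::'a::euclidean_space). (norm p)\<^sup>2)"
proof -
  have "LB m M P (\<lambda>z (p::'a). \<Sum>i\<in>Basis. (p \<bullet> i) * (p \<bullet> i))"
    by (intro LB_sum LB_mult LB_inner) auto
  moreover have "(\<lambda>(z::real) (p::'a). (norm p)\<^sup>2) = (\<lambda>z p. \<Sum>i\<in>Basis. (p \<bullet> i) * (p \<bullet> i))"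
    by (intro ext) (simp add: norm_sq_sum[symmetric] power2_eq_square[symmetric])
  ultimately show ?thesis by simp
qed

lemma COEF1_aux:
  fixes m M P :: real
  shows "LB m M P (c1 :: real \<Rightarrow> 'a::euclidean_space \<Rightarrow> real) \<and> LB m M P (b1 :: real \<Rightarrow> 'a \<Rightarrow> real) \<and>
     (\<forall>k\<in>Basis. LB m M P (\<lambda>z p. q1 z p \<bullet> (k::'a))) \<and>
     (\<exists>c0 \<theta>. c0 > 0 \<and> \<theta> > 0 \<and> (\<forall>z (p::'a). z \<in> {m..M} \<and> norm p \<le> P \<longrightarrow> c1 z p \<ge> c0 \<and> (norm (q1 z p))\<^sup>2 \<le> 1 - \<theta>))"
proof -
  have sq: "LB m M P (\<lambda>z (p::'a). sqrt (1 + (norm p)\<^sup>2))"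
    by (rule LB_sqrt[where k = 1]) (auto intro: LB_add LB_const LB_normsq)
  have inv: "LB m M P (\<lambda>z (p::'a). 1 / sqrt (1 + (norm p)\<^sup>2))"
    by (rule LB_inv[OF sq, where k = 1]) auto
  have "\<forall>k\<in>Basis. LB m M P (\<lambda>z p. q1 z p \<bullet> (k::'a))"
  proof
    fix k :: 'a assume "k \<in> Basis"
    have "LB m M P (\<lambda>z (p::'a). 1 / sqrt (1 + (norm p)\<^sup>2) * (p \<bullet> k))"
      using inv by (intro LB_mult LB_inner)
    then show "LB m M P (\<lambda>z p. q1 z p \<bullet> k)" unfolding q1_def by simp
  qed
  moreover have "LB m M P (c1 :: real \<Rightarrow> 'a \<Rightarrow> real)" unfolding c1_def by (rule LB_const)
  moreover have "LB m M P (b1 :: real \<Rightarrow> 'a \<Rightarrow> real)" unfolding b1_def by (rule LB_normsq)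
  moreover have "\<exists>c0 \<theta>. c0 > 0 \<and> \<theta> > 0 \<and> (\<forall>z (p::'a). z \<in> {m..M} \<and> norm p \<le> P \<longrightarrow> c1 z p \<ge> c0 \<and> (norm (q1 z p))\<^sup>2 \<le> 1 - \<theta>)"
  proof (intro exI conjI allI impI)
    show "(1::real) > 0" by simp
    show "1 / (1 + P\<^sup>2) > 0" by (simp add: add_pos_nonneg)
    fix z and p :: 'a assume a: "z \<in> {m..M} \<and> norm p \<le> P"
    show "c1 z p \<ge> 1" by (simp add: c1_def)
    have pos: "1 + (norm p)\<^sup>2 > 0" by (simp add: add_pos_nonneg)
    have "(norm (q1 z p))\<^sup>2 = (norm p)\<^sup>2 / (1 + (norm p)\<^sup>2)"
      unfolding q1_def using pos by (simp add: power_mult_distrib power_divide)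
    also have "\<dots> = 1 - 1 / (1 + (norm p)\<^sup>2)" using pos by (simp add: field_simps)
    also have "\<dots> \<le> 1 - 1 / (1 + P\<^sup>2)"
    proof -
      have "(norm p)\<^sup>2 \<le> P\<^sup>2" using a by (intro power_mono) auto
      then have "1 / (1 + P\<^sup>2) \<le> 1 / (1 + (norm p)\<^sup>2)" using pos by (intro divide_left_mono) auto
      then show ?thesis by simp
    qed
    finally show "(norm (q1 z p))\<^sup>2 \<le> 1 - 1 / (1 + P\<^sup>2)" .
  qed
  ultimately show ?thesis by blast
qed

lemma COEF1: "COEF UNIV c1 q1 (b1 :: real \<Rightarrow> 'a::euclidean_space \<Rightarrow> real)"
  by (rule COEF_from_LB) (rule COEF1_aux)

definition S2 :: "real \<Rightarrow> 'a::euclidean_space \<Rightarrow> real" where "S2 z p = sqrt (z\<^sup>2 + (norm p)\<^sup>2)"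
definition c2 :: "real \<Rightarrow> 'a::euclidean_space \<Rightarrow> real" where "c2 z p = z / S2 z p"
definition q2 :: "real \<Rightarrow> 'a::euclidean_space \<Rightarrow> 'a" where "q2 z p = (1 / S2 z p) *\<^sub>R p"
definition b2 :: "real \<Rightarrow> 'a::euclidean_space \<Rightarrow> real" where
  "b2 z p = (norm p)\<^sup>2 / S2 z p - z\<^sup>2 * (norm p)\<^sup>2 / (S2 z p)^3"

lemma line_pd:
  assumes "f differentiable (at x)" "i \<in> Basis"
  shows "((\<lambda>t. f (x + t *\<^sub>R i)) has_real_derivative pd i f x) (at 0)"
  using line_deriv[of f x 0 i] assms sum_Basis_delta[OF assms(2)] by simp

lemma div_point:
  fixes a S :: real and p :: "'a::euclidean_space" and N :: "'a \<Rightarrow> 'a \<Rightarrow> real"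
  assumes S: "S > 0"
  shows "(\<Sum>i\<in>Basis. (((p \<bullet> i) * S - a * ((2 * a * (p \<bullet> i) + (\<Sum>j\<in>Basis. 2 * (p \<bullet> j) * N i j)) / (2 * S))) / (S * S)) * (p \<bullet> i)
            + N i i * (a / S))
       = a / S * ((\<Sum>i\<in>Basis. N i i) - bil N ((1 / S) *\<^sub>R p) ((1 / S) *\<^sub>R p))
         + (norm p)\<^sup>2 / S - a\<^sup>2 * (norm p)\<^sup>2 / S^3"
proof -
  have trm: "(((p \<bullet> i) * S - a * ((2 * a * (p \<bullet> i) + (\<Sum>j\<in>Basis. 2 * (p \<bullet> j) * N i j)) / (2 * S))) / (S * S)) * (p \<bullet> i)
            + N i i * (a / S)
     = (p \<bullet> i)\<^sup>2 / S - a\<^sup>2 * (p \<bullet> i)\<^sup>2 / S^3 - a / S^3 * (\<Sum>j\<in>Basis. (p \<bullet> i) * (p \<bullet> j) * N i j) + a / S * N i i" for i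
  proof -
    have "(\<Sum>j\<in>Basis. 2 * (p \<bullet> j) * N i j) = 2 * (\<Sum>j\<in>Basis. (p \<bullet> j) * N i j)"
      by (simp add: sum_distrib_left mult.assoc)
    moreover have "(\<Sum>j\<in>Basis. (p \<bullet> i) * (p \<bullet> j) * N i j) = (p \<bullet> i) * (\<Sum>j\<in>Basis. (p \<bullet> j) * N i j)"
      by (simp add: sum_distrib_left mult.assoc)
    ultimately show ?thesis using S by (simp add: field_simps power2_eq_square power3_eq_cube)
  qed
  have "(\<Sum>i\<in>Basis. (((p \<bullet> i) * S - a * ((2 * a * (p \<bullet> i) + (\<Sum>j\<in>Basis. 2 * (p \<bullet> j) * N i j)) / (2 * S))) / (S * S)) * (p \<bullet> i)
            + N i i * (a / S))
     = (\<Sum>i\<in>Basis. (p \<bullet> i)\<^sup>2) / S - a\<^sup>2 * (\<Sum>i\<in>Basis. (p \<bullet> i)\<^sup>2) / S^3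
       - a / S^3 * (\<Sum>i\<in>Basis. \<Sum>j\<in>Basis. (p \<bullet> i) * (p \<bullet> j) * N i j) + a / S * (\<Sum>i\<in>Basis. N i i)"
    unfolding trm by (simp add: sum.distrib sum_subtractf sum_divide_distrib sum_distrib_left)
  also have "(\<Sum>i\<in>Basis. (p \<bullet> i)\<^sup>2) = (norm p)\<^sup>2" by (simp add: norm_sq_sum)
  also have "(\<Sum>i\<in>Basis. \<Sum>j\<in>Basis. (p \<bullet> i) * (p \<bullet> j) * N i j) = bil N p p" by (simp add: bil_def)
  finally show ?thesis unfolding bil_scale using S
    by (simp add: field_simps power2_eq_square power3_eq_cube)
qed

lemma div_Gf:
  fixes u :: "'a::euclidean_space \<Rightarrow> real"
  assumes du: "u differentiable (at x)" and dpu: "\<forall>j\<in>Basis. pd j u differentiable (at x)" and pos: "u x > 0"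
  shows "divg (\<lambda>z. (u z / sqrt ((u z)\<^sup>2 + (norm (grad u z))\<^sup>2)) *\<^sub>R grad u z) x = Gf c2 q2 b2 (u x) (grad u x) (Nm u x)"
proof -
  define T where "T z = (u z)\<^sup>2 + (\<Sum>j\<in>Basis. (pd j u z)\<^sup>2)" for z
  define V where "V i z = u z / sqrt (T z) * pd i u z" for i z
  have Veq: "(\<lambda>z. ((u z / sqrt ((u z)\<^sup>2 + (norm (grad u z))\<^sup>2)) *\<^sub>R grad u z) \<bullet> i) = V i" if "i \<in> Basis" for i
    by (rule ext) (simp add: V_def T_def norm_grad_sq grad_inner that)
  define a where "a = u x"
  define p where "p = grad u x"
  define N where "N = Nm u x"
  define S where "S = sqrt (T x)"
  have T0: "T x > 0" unfolding T_def using pos by (intro add_pos_nonneg sum_nonneg) auto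
  have S: "S > 0" using T0 by (simp add: S_def)
  have Sn: "S = S2 a p" by (simp add: S_def S2_def T_def a_def p_def norm_grad_sq)
  have dT: "T differentiable (at x)" unfolding T_def using du dpu
    by (intro differentiable_add differentiable_sum differentiable_power) auto
  have dsT: "(\<lambda>z. sqrt (T z)) differentiable (at x)"
  proof -
    obtain D where "(T has_derivative D) (at x)" using dT differentiable_def by blast
    from has_derivative_real_sqrt[OF T0 this] show ?thesis using differentiableI by blast
  qed
  have dV: "pd i (V i) x = (((p \<bullet> i) * S - a * ((2 * a * (p \<bullet> i) + (\<Sum>j\<in>Basis. 2 * (p \<bullet> j) * N i j)) / (2 * S))) / (S * S)) * (p \<bullet> i)
            + N i i * (a / S)" if i: "i \<in> Basis" for i
  proof -
    have dVi: "V i differentiable (at x)" unfolding V_def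
      using du dpu i dsT S T0 by (intro differentiable_mult differentiable_divide) (auto simp: S_def)
    have l1: "((\<lambda>t. V i (x + t *\<^sub>R i)) has_real_derivative pd i (V i) x) (at 0)" by (rule line_pd[OF dVi i])
    have dg: "((\<lambda>t. u (x + t *\<^sub>R i)) has_real_derivative p \<bullet> i) (at 0)"
      using line_pd[OF du i] by (simp add: p_def grad_inner i)
    have dgj: "((\<lambda>t. pd j u (x + t *\<^sub>R i)) has_real_derivative N i j) (at 0)" if j: "j \<in> Basis" for j
      using line_pd[of "pd j u" x i] dpu j i by (simp add: N_def Nm_def)
    have dT1: "((\<lambda>t. T (x + t *\<^sub>R i)) has_real_derivative 2 * a * (p \<bullet> i) + (\<Sum>j\<in>Basis. 2 * (p \<bullet> j) * N i j)) (at 0)"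
    proof -
      have "((\<lambda>t. (u (x + t *\<^sub>R i))\<^sup>2) has_real_derivative 2 * a * (p \<bullet> i)) (at 0)"
        using DERIV_power[OF dg, of 2] by (simp add: a_def mult_ac)
      moreover have "((\<lambda>t. \<Sum>j\<in>Basis. (pd j u (x + t *\<^sub>R i))\<^sup>2) has_real_derivative (\<Sum>j\<in>Basis. 2 * (p \<bullet> j) * N i j)) (at 0)"
      proof (rule DERIV_sum)
        fix j :: 'a assume j: "j \<in> Basis"
        show "((\<lambda>t. (pd j u (x + t *\<^sub>R i))\<^sup>2) has_real_derivative 2 * (p \<bullet> j) * N i j) (at 0)"
          using DERIV_power[OF dgj[OF j], of 2] by (simp add: p_def grad_inner j mult_ac)
      qed
      ultimately show ?thesis unfolding T_def by (rule DERIV_add)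
    qed
    have dS1: "((\<lambda>t. sqrt (T (x + t *\<^sub>R i))) has_real_derivative
        (2 * a * (p \<bullet> i) + (\<Sum>j\<in>Basis. 2 * (p \<bullet> j) * N i j)) / (2 * S)) (at 0)"
    proof -
      have "((\<lambda>t. sqrt (T (x + t *\<^sub>R i))) has_real_derivative
        inverse (sqrt (T (x + 0 *\<^sub>R i))) / 2 * (2 * a * (p \<bullet> i) + (\<Sum>j\<in>Basis. 2 * (p \<bullet> j) * N i j))) (at 0)"
        using DERIV_chain'[OF dT1 DERIV_real_sqrt] T0 by simp
      then show ?thesis by (simp add: S_def field_simps)
    qed
    have dQ: "((\<lambda>t. u (x + t *\<^sub>R i) / sqrt (T (x + t *\<^sub>R i))) has_real_derivative
        ((p \<bullet> i) * S - a * ((2 * a * (p \<bullet> i) + (\<Sum>j\<in>Basis. 2 * (p \<bullet> j) * N i j)) / (2 * S))) / (S * S)) (at 0)"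
      using DERIV_divide[OF dg dS1] S by (simp add: S_def a_def)
    have "((\<lambda>t. V i (x + t *\<^sub>R i)) has_real_derivative
        (((p \<bullet> i) * S - a * ((2 * a * (p \<bullet> i) + (\<Sum>j\<in>Basis. 2 * (p \<bullet> j) * N i j)) / (2 * S))) / (S * S)) * (p \<bullet> i)
            + N i i * (a / S)) (at 0)"
      using DERIV_mult[OF dQ dgj[OF i]] unfolding V_def by (simp add: S_def a_def p_def grad_inner i)
    then show ?thesis using l1 DERIV_unique by blast
  qed
  have "divg (\<lambda>z. (u z / sqrt ((u z)\<^sup>2 + (norm (grad u z))\<^sup>2)) *\<^sub>R grad u z) x = (\<Sum>i\<in>Basis. pd i (V i) x)"
    unfolding divg_def by (rule sum.cong[OF refl], simp only: Veq)
  also have "\<dots> = (\<Sum>i\<in>Basis. (((p \<bullet> i) * S - a * ((2 * a * (p \<bullet> i) + (\<Sum>j\<in>Basis. 2 * (p \<bullet> j) * N i j)) / (2 * S))) / (S * S)) * (p \<bullet> i)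
            + N i i * (a / S))"
    by (rule sum.cong) (simp_all add: dV)
  also have "\<dots> = a / S * ((\<Sum>i\<in>Basis. N i i) - bil N ((1 / S) *\<^sub>R p) ((1 / S) *\<^sub>R p))
         + (norm p)\<^sup>2 / S - a\<^sup>2 * (norm p)\<^sup>2 / S^3" by (rule div_point[OF S])
  also have "\<dots> = Gf c2 q2 b2 a p N"
    unfolding Gf_def Aop_def c2_def q2_def b2_def Sn[symmetric] by simp
  finally show ?thesis by (simp add: a_def p_def N_def)
qed

lemma COEF2_aux:
  fixes m M P :: real
  assumes m: "m > 0"
  shows "LB m M P (c2 :: real \<Rightarrow> 'a::euclidean_space \<Rightarrow> real) \<and> LB m M P (b2 :: real \<Rightarrow> 'a \<Rightarrow> real) \<and>
     (\<forall>k\<in>Basis. LB m M P (\<lambda>z p. q2 z p \<bullet> (k::'a))) \<and>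
     (\<exists>c0 \<theta>. c0 > 0 \<and> \<theta> > 0 \<and> (\<forall>z (p::'a). z \<in> {m..M} \<and> norm p \<le> P \<longrightarrow> c2 z p \<ge> c0 \<and> (norm (q2 z p))\<^sup>2 \<le> 1 - \<theta>))"
proof -
  have Sge: "S2 z p \<ge> m" if "inbox m M P z (p::'a)" for z p
  proof -
    have "m \<le> z" using that by (simp add: inbox_def)
    then have "m\<^sup>2 \<le> z\<^sup>2 + (norm p)\<^sup>2" using m by (smt (verit) power_mono zero_le_power2)
    then have "sqrt (m\<^sup>2) \<le> S2 z p" unfolding S2_def by (rule real_sqrt_le_mono)
    then show ?thesis using m by simp
  qed
  have zz: "LB m M P (\<lambda>z (p::'a). z\<^sup>2 + (norm p)\<^sup>2)"
  proof -
    have "LB m M P (\<lambda>z (p::'a). z * z + (norm p)\<^sup>2)" by (intro LB_add LB_mult LB_z LB_normsq)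
    then show ?thesis by (simp add: power2_eq_square)
  qed
  have S: "LB m M P (S2 :: real \<Rightarrow> 'a \<Rightarrow> real)"
  proof -
    have "LB m M P (\<lambda>z (p::'a). sqrt (z\<^sup>2 + (norm p)\<^sup>2))"
    proof (rule LB_sqrt[OF zz, where k = "m\<^sup>2"])
      show "m\<^sup>2 > 0" using m by simp
      fix z and p :: 'a assume "inbox m M P z p"
      then have "m \<le> z" by (simp add: inbox_def)
      then show "m\<^sup>2 \<le> z\<^sup>2 + (norm p)\<^sup>2" using m by (smt (verit) power_mono zero_le_power2)
    qed
    then show ?thesis unfolding S2_def[abs_def] .
  qed
  have iS: "LB m M P (\<lambda>z (p::'a). 1 / S2 z p)" by (rule LB_inv[OF S m Sge])
  have "\<forall>k\<in>Basis. LB m M P (\<lambda>z p. q2 z p \<bullet> (k::'a))"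
  proof
    fix k :: 'a assume "k \<in> Basis"
    have "LB m M P (\<lambda>z (p::'a). 1 / S2 z p * (p \<bullet> k))" using iS by (intro LB_mult LB_inner)
    then show "LB m M P (\<lambda>z p. q2 z p \<bullet> k)" unfolding q2_def by simp
  qed
  moreover have "LB m M P (c2 :: real \<Rightarrow> 'a \<Rightarrow> real)"
  proof -
    have "LB m M P (\<lambda>z (p::'a). z * (1 / S2 z p))" using iS by (intro LB_mult LB_z)
    then show ?thesis unfolding c2_def[abs_def] by simp
  qed
  moreover have "LB m M P (b2 :: real \<Rightarrow> 'a \<Rightarrow> real)"
  proof -
    have "LB m M P (\<lambda>z (p::'a). (norm p)\<^sup>2 * (1 / S2 z p) - z * z * (norm p)\<^sup>2 * ((1 / S2 z p) * (1 / S2 z p) * (1 / S2 z p)))"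
      using iS by (intro LB_diff LB_mult LB_z LB_normsq)
    moreover have "(\<lambda>z (p::'a). (norm p)\<^sup>2 * (1 / S2 z p) - z * z * (norm p)\<^sup>2 * ((1 / S2 z p) * (1 / S2 z p) * (1 / S2 z p)))
        = b2" unfolding b2_def[abs_def] by (intro ext) (simp add: power2_eq_square power3_eq_cube)
    ultimately show ?thesis by simp
  qed
  moreover have "\<exists>c0 \<theta>. c0 > 0 \<and> \<theta> > 0 \<and> (\<forall>z (p::'a). z \<in> {m..M} \<and> norm p \<le> P \<longrightarrow> c2 z p \<ge> c0 \<and> (norm (q2 z p))\<^sup>2 \<le> 1 - \<theta>)"
  proof (intro exI conjI allI impI)
    define B where "B = M\<^sup>2 + P\<^sup>2 + 1"
    have B: "B > 0" unfolding B_def by (simp add: add_nonneg_pos)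
    show "m / sqrt B > 0" using m B by simp
    show "m\<^sup>2 / B > 0" using m B by simp
    fix z and p :: 'a assume a: "z \<in> {m..M} \<and> norm p \<le> P"
    have z: "m \<le> z" "z \<le> M" "0 < z" using a m by auto
    have "z\<^sup>2 \<le> M\<^sup>2" using z by (intro power_mono) auto
    moreover have "(norm p)\<^sup>2 \<le> P\<^sup>2" using a by (intro power_mono) auto
    ultimately have T: "z\<^sup>2 + (norm p)\<^sup>2 \<le> B" unfolding B_def by simp
    have Tp: "z\<^sup>2 + (norm p)\<^sup>2 > 0" using z by (simp add: add_pos_nonneg)
    have SB: "S2 z p \<le> sqrt B" unfolding S2_def using T by simp
    have Sp: "S2 z p > 0" unfolding S2_def using Tp by simp
    have "m / sqrt B \<le> z / sqrt B" using z B by (simp add: divide_right_mono)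
    also have "\<dots> \<le> z / S2 z p" using z Sp SB B by (intro divide_left_mono) auto
    finally show "c2 z p \<ge> m / sqrt B" by (simp add: c2_def)
    have "(norm (q2 z p))\<^sup>2 = (norm p)\<^sup>2 / (z\<^sup>2 + (norm p)\<^sup>2)"
      unfolding q2_def S2_def using Tp by (simp add: power_mult_distrib power_divide)
    also have "\<dots> = 1 - z\<^sup>2 / (z\<^sup>2 + (norm p)\<^sup>2)"
    proof -
      have "z\<^sup>2 / (z\<^sup>2 + (norm p)\<^sup>2) + (norm p)\<^sup>2 / (z\<^sup>2 + (norm p)\<^sup>2) = 1"
        using Tp by (metis add_divide_distrib divide_self less_irrefl)
      then show ?thesis by linarith
    qed
    also have "\<dots> \<le> 1 - m\<^sup>2 / B"
    proof -
      have "m\<^sup>2 \<le> z\<^sup>2" using z m by (intro power_mono) auto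
      then have "m\<^sup>2 / B \<le> z\<^sup>2 / B" using B by (simp add: divide_right_mono)
      also have "\<dots> \<le> z\<^sup>2 / (z\<^sup>2 + (norm p)\<^sup>2)" using T Tp by (intro divide_left_mono) auto
      finally show ?thesis by simp
    qed
    finally show "(norm (q2 z p))\<^sup>2 \<le> 1 - m\<^sup>2 / B" .
  qed
  ultimately show ?thesis by blast
qed

lemma COEF2: "COEF {0<..} c2 q2 (b2 :: real \<Rightarrow> 'a::euclidean_space \<Rightarrow> real)"
  by (rule COEF_from_LB) (rule COEF2_aux, simp)

theorem mainTheorem4:
  fixes U :: "'a::euclidean_space set"
  assumes "open U" and "connected U"
  shows "(\<forall>w w'. C2_on U w \<and> C2_on U w' \<and>
            (\<forall>y\<in>U. Qop w y \<ge> Qop w' y) \<and> (\<forall>y\<in>U. w y \<le> w' y) \<and>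
            (\<exists>x\<in>U. w x = w' x) \<longrightarrow> (\<forall>y\<in>U. w y = w' y))
       \<and> (\<forall>u u'. C2_on U u \<and> C2_on U u' \<and>
            (\<forall>y\<in>U. u y > 0) \<and> (\<forall>y\<in>U. u' y > 0) \<and>
            (\<forall>y\<in>U. divg (\<lambda>z. (u z / sqrt ((u z)\<^sup>2 + (norm (grad u z))\<^sup>2)) *\<^sub>R grad u z) y
                   \<ge> divg (\<lambda>z. (u' z / sqrt ((u' z)\<^sup>2 + (norm (grad u' z))\<^sup>2)) *\<^sub>R grad u' z) y) \<and>
            (\<forall>y\<in>U. u y \<le> u' y) \<and>
            (\<exists>x\<in>U. u x = u' x) \<longrightarrow> (\<forall>y\<in>U. u y = u' y))"
proof (intro conjI allI impI)
  fix w w' :: "'a \<Rightarrow> real"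
  assume a: "C2_on U w \<and> C2_on U w' \<and> (\<forall>y\<in>U. Qop w y \<ge> Qop w' y) \<and> (\<forall>y\<in>U. w y \<le> w' y) \<and> (\<exists>x\<in>U. w x = w' x)"
  then obtain x where x: "x \<in> U" "w x = w' x" by blast
  have ineq: "\<forall>y\<in>U. Gf c1 q1 b1 (w y) (grad w y) (Nm w y) \<ge> Gf c1 q1 b1 (w' y) (grad w' y) (Nm w' y)"
    using a by (simp add: Qop_Gf[symmetric])
  show "\<forall>y\<in>U. w y = w' y"
    by (rule comparison[OF assms _ _ ineq _ _ COEF1 x]) (use a in auto)
next
  fix u u' :: "'a \<Rightarrow> real"
  assume a: "C2_on U u \<and> C2_on U u' \<and> (\<forall>y\<in>U. u y > 0) \<and> (\<forall>y\<in>U. u' y > 0) \<and>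
            (\<forall>y\<in>U. divg (\<lambda>z. (u z / sqrt ((u z)\<^sup>2 + (norm (grad u z))\<^sup>2)) *\<^sub>R grad u z) y
                   \<ge> divg (\<lambda>z. (u' z / sqrt ((u' z)\<^sup>2 + (norm (grad u' z))\<^sup>2)) *\<^sub>R grad u' z) y) \<and>
            (\<forall>y\<in>U. u y \<le> u' y) \<and> (\<exists>x\<in>U. u x = u' x)"
  then obtain x where x: "x \<in> U" "u x = u' x" by blast
  have ineq: "\<forall>y\<in>U. Gf c2 q2 b2 (u y) (grad u y) (Nm u y) \<ge> Gf c2 q2 b2 (u' y) (grad u' y) (Nm u' y)"
  proof
    fix y assume y: "y \<in> U"
    have "Gf c2 q2 b2 (u y) (grad u y) (Nm u y) = divg (\<lambda>z. (u z / sqrt ((u z)\<^sup>2 + (norm (grad u z))\<^sup>2)) *\<^sub>R grad u z) y"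
      using a y unfolding C2_on_def by (intro div_Gf[symmetric]) auto
    moreover have "Gf c2 q2 b2 (u' y) (grad u' y) (Nm u' y) = divg (\<lambda>z. (u' z / sqrt ((u' z)\<^sup>2 + (norm (grad u' z))\<^sup>2)) *\<^sub>R grad u' z) y"
      using a y unfolding C2_on_def by (intro div_Gf[symmetric]) auto
    ultimately show "Gf c2 q2 b2 (u y) (grad u y) (Nm u y) \<ge> Gf c2 q2 b2 (u' y) (grad u' y) (Nm u' y)"
      using a y by simp
  qed
  show "\<forall>y\<in>U. u y = u' y"
    by (rule comparison[OF assms _ _ ineq _ _ COEF2 x]) (use a in auto)
qed

end
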